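(* Let $t$ be a positive integer. For every finite chordal trigraph $H$ whose total graph $\mathcal T(H)$ has clique number at most $t+1$ and whose real graph is triangle-free, every set $X\subseteq V(G'_t)$ such that $G'_t[X]$ is $H$-free, and every $u\in V(G'_t)$, there exists a downward path $P_u$ from $u$ in $T'_t$ with $|V(P_u)\cap X|\le|V(H)|-1$.
   Context: A trigraph is $(V,E_B,E_R)$ with disjoint sets $E_B$ (black edges) and $E_R$ (red edges); adjacency type of a pair is black, red or non-edge. Total graph: $(V,E_B\cup E_R)$; real graph: $(V,E_B)$; chordal if the total graph is chordal. $G[X]$ denotes the induced subtrigraph; $G$ is $H$-free if no induced subtrigraph of $G$ is isomorphic to $H$ (isomorphism preserving adjacency types). Construction of $G'_t$, $T'_t$: a countably infinite trigraph $G'_t$ and rooted tree $T'_t$ on the same vertex set, partitioned into finite layers $L_0,L_1,\dots$ each inducing a left-to-right path of black edges. $L_0$ is a single vertex, the root. With $L_{\le i}=L_0\cup\dots\cup L_i$, layer $L_{i+1}$ is built (starting empty) as follows: for each $u\in L_i$ from left to right, let $N^\uparrow[u]:=(N_{\mathcal T(G'_t)}(u)\cap L_{\le i-1})\cup\{u\}$ and let $\mathcal B$ be the set of subsets of $N^\uparrow[u]$ all of whose pairs are red edges. For every ordered pair $(B,R)$ of disjoint subsets of $N^\uparrow[u]$ with $B\in\mathcal B$ and $|B\cup R|\le t$: append a new vertex $v_{B,R}$ at the right end of $L_{i+1}$ (black edge to the previously rightmost vertex of $L_{i+1}$, if any), make it a child of $u$, add black edges from $v_{B,R}$ to all of $B$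 and red edges to all of $R$; then append another new vertex $v'_{B,R}$ at the right end of $L_{i+1}$ (black edge to the previously rightmost vertex) and make it a child of $u$, with no further edges. A downward path from $u$ in $T'_t$ is an infinite path $u_1u_2\dots$ in $T'_t$ with $u_1=u$ and each $u_i$ ($i>1$) a child of $u_{i-1}$. *)

theory Defs
  imports Main
begin

definition trigraph :: "'a set \<Rightarrow> 'a set set \<Rightarrow> 'a set set \<Rightarrow> bool" where
  "trigraph V EB ER \<longleftrightarrow> EB \<inter> ER = {} \<and>
     (\<forall>e \<in> EB \<union> ER. \<exists>x y. x \<noteq> y \<and> x \<in> V \<and> y \<in> V \<and> e = {x, y})"

definition induced_long_cycle :: "'a set \<Rightarrow> 'a set set \<Rightarrow> 'a list \<Rightarrow> bool" where
  "induced_long_cycle V E xs \<longleftrightarrow> length xs \<ge> 4 \<and> distinct xs \<and> set xs \<subseteq> V \<and>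
     (\<forall>i < length xs. \<forall>j < length xs. i \<noteq> j \<longrightarrow>
        ({xs ! i, xs ! j} \<in> E \<longleftrightarrow> (j = Suc i mod length xs \<or> i = Suc j mod length xs)))"

definition chordal_graph :: "'a set \<Rightarrow> 'a set set \<Rightarrow> bool" where
  "chordal_graph V E \<longleftrightarrow> \<not> (\<exists>xs. induced_long_cycle V E xs)"

definition chordal_trigraph :: "'a set \<Rightarrow> 'a set set \<Rightarrow> 'a set set \<Rightarrow> bool" where
  "chordal_trigraph V EB ER \<longleftrightarrow> chordal_graph V (EB \<union> ER)"

definition clique_number_le :: "'a set \<Rightarrow> 'a set set \<Rightarrow> nat \<Rightarrow> bool" where
  "clique_number_le V E k \<longleftrightarrow>
     (\<forall>K \<subseteq> V. (\<forall>x\<in>K. \<forall>y\<in>K. x \<noteq> y \<longrightarrow> {x, y} \<in> E) \<longrightarrow> finite K \<and> card K \<le> k)"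

definition triangle_free :: "'a set \<Rightarrow> 'a set set \<Rightarrow> bool" where
  "triangle_free V E \<longleftrightarrow> \<not> (\<exists>x y z. x \<in> V \<and> y \<in> V \<and> z \<in> V \<and> distinct [x, y, z] \<and>
      {x, y} \<in> E \<and> {y, z} \<in> E \<and> {x, z} \<in> E)"

definition contains_induced ::
  "'h set \<Rightarrow> 'h set set \<Rightarrow> 'h set set \<Rightarrow> 'v set \<Rightarrow> 'v set set \<Rightarrow> 'v set set \<Rightarrow> bool" where
  "contains_induced VH EBH ERH X EB ER \<longleftrightarrow>
     (\<exists>f. inj_on f VH \<and> f ` VH \<subseteq> X \<and>
        (\<forall>a\<in>VH. \<forall>b\<in>VH. a \<noteq> b \<longrightarrow>
           ({f a, f b} \<in> EB \<longleftrightarrow> {a, b} \<in> EBH) \<and> ({f a, f b} \<in> ER \<longleftrightarrow> {a, b} \<in> ERH)))"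

definition H_free_on ::
  "'h set \<Rightarrow> 'h set set \<Rightarrow> 'h set set \<Rightarrow> 'v set \<Rightarrow> 'v set set \<Rightarrow> 'v set set \<Rightarrow> bool" where
  "H_free_on VH EBH ERH X EB ER \<longleftrightarrow> \<not> contains_induced VH EBH ERH X EB ER"

text \<open>
  Data:
  \<^item> Ls i : the layer L_i, as a list ordered from left to right;
  \<^item> par w : the parent in T'_t of a non-root vertex w;
  \<^item> lab w = (B, R, primed) : vertex w is v_{B,R} (primed = False) or v'_{B,R} (primed = True);
  \<^item> EB, ER : black and red edges of G'_t.
  The order in which the pairs (B,R) are processed for a given u is not fixed in the
  paper, so any enumeration order is allowed (existentially chosen per layer).\<close>

definition layers_upto :: "(nat \<Rightarrow> 'v list) \<Rightarrow> nat \<Rightarrow> 'v set" where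
  "layers_upto Ls i = (\<Union>j\<le>i. set (Ls j))"

definition Nup :: "(nat \<Rightarrow> 'v list) \<Rightarrow> 'v set set \<Rightarrow> 'v set set \<Rightarrow> nat \<Rightarrow> 'v \<Rightarrow> 'v set" where
  "Nup Ls EB ER i u = {u} \<union> {x. (\<exists>j<i. x \<in> set (Ls j)) \<and> {u, x} \<in> EB \<union> ER}"

definition admissible ::
  "nat \<Rightarrow> (nat \<Rightarrow> 'v list) \<Rightarrow> 'v set set \<Rightarrow> 'v set set \<Rightarrow> nat \<Rightarrow> 'v \<Rightarrow> ('v set \<times> 'v set) set" where
  "admissible t Ls EB ER i u =
     {(B, R). B \<subseteq> Nup Ls EB ER i u \<and> R \<subseteq> Nup Ls EB ER i u \<and> B \<inter> R = {} \<and>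
              (\<forall>x\<in>B. \<forall>y\<in>B. x \<noteq> y \<longrightarrow> {x, y} \<in> ER) \<and>
              card (B \<union> R) \<le> t}"

definition Gt_construction ::
  "nat \<Rightarrow> 'v set \<Rightarrow> 'v \<Rightarrow> (nat \<Rightarrow> 'v list) \<Rightarrow> ('v \<Rightarrow> 'v) \<Rightarrow> ('v \<Rightarrow> 'v set \<times> 'v set \<times> bool)
     \<Rightarrow> 'v set set \<Rightarrow> 'v set set \<Rightarrow> bool" where
  "Gt_construction t V root Ls par lab EB ER \<longleftrightarrow>
     Ls 0 = [root] \<and>
     (\<forall>i. distinct (Ls i)) \<and>
     (\<forall>i j. i \<noteq> j \<longrightarrow> set (Ls i) \<inter> set (Ls j) = {}) \<and>
     V = (\<Union>i. set (Ls i)) \<and>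
     EB = {{Ls i ! k, Ls i ! Suc k} | i k. Suc k < length (Ls i)}
          \<union> {{w, b} | w b. \<exists>i B R. w \<in> set (Ls (Suc i)) \<and> lab w = (B, R, False) \<and> b \<in> B} \<and>
     ER = {{w, r} | w r. \<exists>i B R. w \<in> set (Ls (Suc i)) \<and> lab w = (B, R, False) \<and> r \<in> R} \<and>
     (\<forall>i. \<exists>enum :: 'v \<Rightarrow> ('v set \<times> 'v set) list.
        (\<forall>u \<in> set (Ls i). distinct (enum u) \<and> set (enum u) = admissible t Ls EB ER i u) \<and>
        map (\<lambda>w. (par w, lab w)) (Ls (Suc i)) =
          concat (map (\<lambda>u. concat (map (\<lambda>(B, R). [(u, (B, R, False)), (u, (B, R, True))])
                                       (enum u))) (Ls i)))"

definition downward_path :: "'v set \<Rightarrow> 'v \<Rightarrow> ('v \<Rightarrow> 'v) \<Rightarrow> 'v \<Rightarrow> (nat \<Rightarrow> 'v) \<Rightarrow> bool" where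
  "downward_path V root par u p \<longleftrightarrow>
     p 0 = u \<and> (\<forall>n. p (Suc n) \<in> V \<and> p (Suc n) \<noteq> root \<and> par (p (Suc n)) = p n)"

end

theory Submission
  imports Defs
begin

lemma nth_concat_pairs:
  "k < 2 * length zs \<Longrightarrow> concat (map (\<lambda>z. [p z, q z]) zs) ! k =
     (if even k then p (zs ! (k div 2)) else q (zs ! (k div 2)))"
proof (induction zs arbitrary: k)
  case Nil then show ?case by simp
next
  case (Cons z zs)
  show ?case
  proof (cases k)
    case 0 then show ?thesis by simp
  next
    case (Suc k1)
    show ?thesis
    proof (cases k1)
      case 0 then show ?thesis using Suc by simp
    next
      case (Suc k2)
      then have "k2 < 2 * length zs" using Cons.prems \<open>k = Suc k1\<close> by simp
      then show ?thesis using Cons.IH[of k2] Suc \<open>k = Suc k1\<close> by simp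
    qed
  qed
qed

lemma length_concat_pairs: "length (concat (map (\<lambda>z. [p z, q z]) zs)) = 2 * length zs"
  by (induction zs) auto

lemma consec_concat:
  assumes "\<forall>x\<in>set xs. e x \<noteq> []"
    and "Suc m < length (concat (map (\<lambda>u. map (Pair u) (e u)) xs))"
  shows "fst (concat (map (\<lambda>u. map (Pair u) (e u)) xs) ! m) = fst (concat (map (\<lambda>u. map (Pair u) (e u)) xs) ! Suc m)
     \<or> (\<exists>p. Suc p < length xs \<and> fst (concat (map (\<lambda>u. map (Pair u) (e u)) xs) ! m) = xs ! p
            \<and> fst (concat (map (\<lambda>u. map (Pair u) (e u)) xs) ! Suc m) = xs ! Suc p)"
  using assms
proof (induction xs arbitrary: m)
  case Nil then show ?case by simp
next
  case (Cons x xs)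
  define ys where "ys = concat (map (\<lambda>u. map (Pair u) (e u)) xs)"
  have eq: "concat (map (\<lambda>u. map (Pair u) (e u)) (x # xs)) = map (Pair x) (e x) @ ys"
    by (simp add: ys_def)
  have ne: "e x \<noteq> []" using Cons.prems by simp
  show ?case
  proof (cases "Suc m < length (e x)")
    case True
    then show ?thesis unfolding eq by (simp add: nth_append)
  next
    case False
    show ?thesis
    proof (cases "Suc m = length (e x)")
      case True
      then have "ys \<noteq> []" using Cons.prems(2) unfolding eq by auto
      then obtain x2 xs2 where xs: "xs = x2 # xs2" unfolding ys_def by (cases xs) auto
      have "e x2 \<noteq> []" using Cons.prems xs by simp
      then have "fst (ys ! 0) = x2" unfolding ys_def xs by (cases "e x2") auto
      then have "fst ((map (Pair x) (e x) @ ys) ! Suc m) = x2" using True by (simp add: nth_append)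
      moreover have "fst ((map (Pair x) (e x) @ ys) ! m) = x" using True by (simp add: nth_append)
      ultimately show ?thesis unfolding eq using xs by (intro disjI2 exI[of _ 0]) auto
    next
      case False2: False
      then have ge: "m \<ge> length (e x)" using False by simp
      have "Suc (m - length (e x)) < length ys" using Cons.prems(2) ge unfolding eq by simp
      then have IH: "fst (ys ! (m - length (e x))) = fst (ys ! Suc (m - length (e x))) \<or>
        (\<exists>p. Suc p < length xs \<and> fst (ys ! (m - length (e x))) = xs ! p \<and> fst (ys ! Suc (m - length (e x))) = xs ! Suc p)"
        using Cons.IH[of "m - length (e x)"] Cons.prems(1) unfolding ys_def by simp
      have a: "(map (Pair x) (e x) @ ys) ! m = ys ! (m - length (e x))" using ge by (simp add: nth_append)
      have b: "(map (Pair x) (e x) @ ys) ! Suc m = ys ! Suc (m - length (e x))" using ge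
        by (simp add: nth_append Suc_diff_le)
      show ?thesis unfolding eq a b using IH
        by (metis Suc_less_eq length_Cons nth_Cons_Suc)
    qed
  qed
qed

lemma concat_concat_map:
  "concat (map (\<lambda>u. concat (map (\<lambda>(B, R). [(u, (B, R, False)), (u, (B, R, True))]) (e u))) xs) =
   concat (map (\<lambda>z. [(fst z, (fst (snd z), snd (snd z), False)), (fst z, (fst (snd z), snd (snd z), True))])
     (concat (map (\<lambda>u. map (Pair u) (e u)) xs)))"
  by (induction xs) (auto simp: map_concat comp_def case_prod_beta)


locale gtc =
  fixes t :: nat and V :: "'v set" and root :: 'v and Ls :: "nat \<Rightarrow> 'v list" and par :: "'v \<Rightarrow> 'v"
    and lab :: "'v \<Rightarrow> 'v set \<times> 'v set \<times> bool" and EB ER :: "'v set set"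
  assumes gc: "Gt_construction t V root Ls par lab EB ER"
begin

lemma L0: "Ls 0 = [root]" using gc by (simp add: Gt_construction_def)
lemma Ldist: "distinct (Ls i)" using gc by (simp add: Gt_construction_def)
lemma Ldisj: "i \<noteq> j \<Longrightarrow> set (Ls i) \<inter> set (Ls j) = {}" using gc by (simp add: Gt_construction_def)
lemma Vdef: "V = (\<Union>i. set (Ls i))" using gc by (simp add: Gt_construction_def)
lemma EBdef: "EB = {{Ls i ! k, Ls i ! Suc k} | i k. Suc k < length (Ls i)}
          \<union> {{w, b} | w b. \<exists>i B R. w \<in> set (Ls (Suc i)) \<and> lab w = (B, R, False) \<and> b \<in> B}"
  using gc by (simp add: Gt_construction_def)
lemma ERdef: "ER = {{w, r} | w r. \<exists>i B R. w \<in> set (Ls (Suc i)) \<and> lab w = (B, R, False) \<and> r \<in> R}"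
  using gc by (simp add: Gt_construction_def)

definition Enum where "Enum = (SOME E. \<forall>i. (\<forall>u \<in> set (Ls i). distinct (E i u) \<and> set (E i u) = admissible t Ls EB ER i u) \<and>
        map (\<lambda>w. (par w, lab w)) (Ls (Suc i)) =
          concat (map (\<lambda>u. concat (map (\<lambda>(B, R). [(u, (B, R, False)), (u, (B, R, True))])
                                       (E i u))) (Ls i)))"

lemma Enum: "\<forall>i. (\<forall>u \<in> set (Ls i). distinct (Enum i u) \<and> set (Enum i u) = admissible t Ls EB ER i u) \<and>
        map (\<lambda>w. (par w, lab w)) (Ls (Suc i)) =
          concat (map (\<lambda>u. concat (map (\<lambda>(B, R). [(u, (B, R, False)), (u, (B, R, True))])
                                       (Enum i u))) (Ls i))"
proof -
  have "\<forall>i. \<exists>E. (\<forall>u \<in> set (Ls i). distinct (E u) \<and> set (E u) = admissible t Ls EB ER i u) \<and>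
        map (\<lambda>w. (par w, lab w)) (Ls (Suc i)) =
          concat (map (\<lambda>u. concat (map (\<lambda>(B, R). [(u, (B, R, False)), (u, (B, R, True))])
                                       (E u))) (Ls i))"
    using gc unfolding Gt_construction_def by (elim conjE) assumption
  then have "\<exists>E. \<forall>i. (\<forall>u \<in> set (Ls i). distinct (E i u) \<and> set (E i u) = admissible t Ls EB ER i u) \<and>
        map (\<lambda>w. (par w, lab w)) (Ls (Suc i)) =
          concat (map (\<lambda>u. concat (map (\<lambda>(B, R). [(u, (B, R, False)), (u, (B, R, True))])
                                       (E i u))) (Ls i))"
    by (rule choice)
  then show ?thesis unfolding Enum_def by (rule someI_ex)
qed

lemma Enum_set: "u \<in> set (Ls i) \<Longrightarrow> set (Enum i u) = admissible t Ls EB ER i u"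
  using Enum by blast

definition zs where "zs i = concat (map (\<lambda>u. map (Pair u) (Enum i u)) (Ls i))"

lemma mapeq: "map (\<lambda>w. (par w, lab w)) (Ls (Suc i)) =
   concat (map (\<lambda>z. [(fst z, (fst (snd z), snd (snd z), False)), (fst z, (fst (snd z), snd (snd z), True))]) (zs i))"
proof -
  have "map (\<lambda>w. (par w, lab w)) (Ls (Suc i)) =
          concat (map (\<lambda>u. concat (map (\<lambda>(B, R). [(u, (B, R, False)), (u, (B, R, True))])
                                       (Enum i u))) (Ls i))"
    by (rule conjunct2[OF spec[OF Enum]])
  also have "\<dots> = concat (map (\<lambda>z. [(fst z, (fst (snd z), snd (snd z), False)), (fst z, (fst (snd z), snd (snd z), True))])
     (concat (map (\<lambda>u. map (Pair u) (Enum i u)) (Ls i))))"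
    by (rule concat_concat_map)
  finally show ?thesis unfolding zs_def .
qed

lemma len_succ: "length (Ls (Suc i)) = 2 * length (zs i)"
  using arg_cong[OF mapeq[of i], of length] by (simp add: length_concat_pairs)

lemma nth_succ:
  assumes "k < length (Ls (Suc i))"
  shows "par (Ls (Suc i) ! k) = fst (zs i ! (k div 2))"
    "lab (Ls (Suc i) ! k) = (fst (snd (zs i ! (k div 2))), snd (snd (zs i ! (k div 2))), odd k)"
proof -
  have "(par (Ls (Suc i) ! k), lab (Ls (Suc i) ! k)) = map (\<lambda>w. (par w, lab w)) (Ls (Suc i)) ! k"
    using assms by simp
  also have "\<dots> = concat (map (\<lambda>z. [(fst z, (fst (snd z), snd (snd z), False)), (fst z, (fst (snd z), snd (snd z), True))]) (zs i)) ! k"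
    by (simp only: mapeq)
  also have "\<dots> = (if even k then (fst (zs i ! (k div 2)), (fst (snd (zs i ! (k div 2))), snd (snd (zs i ! (k div 2))), False))
                     else (fst (zs i ! (k div 2)), (fst (snd (zs i ! (k div 2))), snd (snd (zs i ! (k div 2))), True)))"
    using assms len_succ by (intro nth_concat_pairs) simp
  finally show "par (Ls (Suc i) ! k) = fst (zs i ! (k div 2))"
    "lab (Ls (Suc i) ! k) = (fst (snd (zs i ! (k div 2))), snd (snd (zs i ! (k div 2))), odd k)"
    by (auto split: if_splits)
qed

lemma adm_empty: "({}, {}) \<in> admissible t Ls EB ER i u"
  by (simp add: admissible_def Nup_def)

lemma Enum_ne: "u \<in> set (Ls i) \<Longrightarrow> Enum i u \<noteq> []"
proof
  assume "u \<in> set (Ls i)" "Enum i u = []"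
  then have "admissible t Ls EB ER i u = {}" using Enum_set by force
  then show False using adm_empty by blast
qed

lemma set_zs: "set (zs i) = {(u, BR). u \<in> set (Ls i) \<and> BR \<in> admissible t Ls EB ER i u}"
proof -
  have "set (zs i) = (\<Union>u\<in>set (Ls i). Pair u ` set (Enum i u))" unfolding zs_def by simp
  also have "\<dots> = (\<Union>u\<in>set (Ls i). Pair u ` admissible t Ls EB ER i u)" using Enum_set by simp
  finally show ?thesis by blast
qed

definition lev where "lev x = (SOME i. x \<in> set (Ls i))"

lemma lev: "x \<in> set (Ls i) \<Longrightarrow> lev x = i"
  unfolding lev_def by (rule some_equality) (use Ldisj in blast)+

lemma inV: "x \<in> set (Ls i) \<Longrightarrow> x \<in> V" using Vdef by blast

lemma V_lev: "x \<in> V \<Longrightarrow> x \<in> set (Ls (lev x))"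
  using Vdef lev by blast

lemma root_lev: "root \<in> V" "lev root = 0"
proof -
  have "root \<in> set (Ls 0)" using L0 by simp
  then show "root \<in> V" "lev root = 0" using inV lev by auto
qed

lemma succ_props:
  assumes "w \<in> set (Ls (Suc i))"
  shows "par w \<in> set (Ls i)" "(fst (lab w), fst (snd (lab w))) \<in> admissible t Ls EB ER i (par w)"
proof -
  obtain k where k: "k < length (Ls (Suc i))" "w = Ls (Suc i) ! k" using assms by (auto simp: in_set_conv_nth)
  have "k div 2 < length (zs i)" using k len_succ by simp
  then have "zs i ! (k div 2) \<in> set (zs i)" by simp
  then show "par w \<in> set (Ls i)" "(fst (lab w), fst (snd (lab w))) \<in> admissible t Ls EB ER i (par w)"
    using nth_succ[OF k(1)] k(2) set_zs by auto
qed

lemma child_exists: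
  assumes "u \<in> set (Ls i)" "(B, R) \<in> admissible t Ls EB ER i u"
  shows "\<exists>w \<in> set (Ls (Suc i)). par w = u \<and> lab w = (B, R, False)"
proof -
  have "(u, (B, R)) \<in> set (zs i)" using assms set_zs by auto
  then obtain m where m: "m < length (zs i)" "zs i ! m = (u, (B, R))" by (auto simp: in_set_conv_nth)
  have "2 * m < length (Ls (Suc i))" using m len_succ by simp
  moreover have "par (Ls (Suc i) ! (2*m)) = u" "lab (Ls (Suc i) ! (2*m)) = (B, R, False)"
    using nth_succ[OF \<open>2 * m < length (Ls (Suc i))\<close>] m by auto
  ultimately show ?thesis by (metis nth_mem)
qed

lemma parity:
  assumes "k < length (Ls (Suc i))"
  shows "snd (snd (lab (Ls (Suc i) ! k))) = odd k"
  using nth_succ(2)[OF assms] by simp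

lemma consec_layer:
  assumes "Suc k < length (Ls (Suc i))"
  shows "par (Ls (Suc i) ! k) = par (Ls (Suc i) ! Suc k) \<or>
    (\<exists>m. Suc m < length (Ls i) \<and> par (Ls (Suc i) ! k) = Ls i ! m \<and> par (Ls (Suc i) ! Suc k) = Ls i ! Suc m)"
proof (cases "even k")
  case True
  then have "Suc k div 2 = k div 2" by presburger
  then show ?thesis using nth_succ(1)[of k i] nth_succ(1)[OF assms] assms by simp
next
  case False
  then have e: "Suc k div 2 = Suc (k div 2)" by presburger
  have "Suc (k div 2) < length (zs i)" using assms len_succ[of i] False by presburger
  then have "fst (zs i ! (k div 2)) = fst (zs i ! Suc (k div 2)) \<or>
    (\<exists>p. Suc p < length (Ls i) \<and> fst (zs i ! (k div 2)) = Ls i ! p \<and> fst (zs i ! Suc (k div 2)) = Ls i ! Suc p)"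
    unfolding zs_def by (intro consec_concat) (use Enum_ne in auto)
  then show ?thesis using nth_succ(1)[of k i] nth_succ(1)[OF assms] assms e by simp
qed

end

context gtc begin

abbreviation "lB w \<equiv> fst (lab w)"
abbreviation "lR w \<equiv> fst (snd (lab w))"
abbreviation "lP w \<equiv> snd (snd (lab w))"

lemma Nup_cases: "x \<in> Nup Ls EB ER i u \<Longrightarrow> x = u \<or> (\<exists>j<i. x \<in> set (Ls j))"
  unfolding Nup_def by auto

lemma Nup_lev:
  assumes "u \<in> set (Ls i)" "x \<in> Nup Ls EB ER i u"
  shows "x \<in> V" "lev x \<le> i" "x \<noteq> u \<Longrightarrow> lev x < i"
  using Nup_cases[OF assms(2)] assms(1) inV lev by fastforce+

lemma lab_adm: "w \<in> set (Ls (Suc i)) \<Longrightarrow> lB w \<subseteq> Nup Ls EB ER i (par w) \<and> lR w \<subseteq> Nup Ls EB ER i (par w)"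
  using succ_props(2)[of w i] unfolding admissible_def by auto

lemma lab_lev:
  assumes "w \<in> set (Ls (Suc i))" "x \<in> lB w \<union> lR w"
  shows "x \<in> V" "lev x \<le> i"
  using lab_adm[OF assms(1)] assms(2) Nup_lev[OF succ_props(1)[OF assms(1)]] by blast+

lemma E1:
  assumes "{x, y} \<in> EB" "lev x < lev y"
  shows "\<exists>i. y \<in> set (Ls (Suc i)) \<and> x \<in> lB y \<and> \<not> lP y"
proof -
  have "(\<exists>i k. Suc k < length (Ls i) \<and> {x, y} = {Ls i ! k, Ls i ! Suc k}) \<or>
        (\<exists>w b i B R. {x, y} = {w, b} \<and> w \<in> set (Ls (Suc i)) \<and> lab w = (B, R, False) \<and> b \<in> B)"
    using assms(1) EBdef by blast
  then show ?thesis
  proof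
    assume "\<exists>i k. Suc k < length (Ls i) \<and> {x, y} = {Ls i ! k, Ls i ! Suc k}"
    then obtain i k where ik: "Suc k < length (Ls i)" "{x, y} = {Ls i ! k, Ls i ! Suc k}" by blast
    then have "x \<in> set (Ls i)" "y \<in> set (Ls i)"
      by (metis Suc_lessD doubleton_eq_iff nth_mem)+
    then show ?thesis using assms(2) lev by simp
  next
    assume "\<exists>w b i B R. {x, y} = {w, b} \<and> w \<in> set (Ls (Suc i)) \<and> lab w = (B, R, False) \<and> b \<in> B"
    then obtain w b i B R where h: "{x, y} = {w, b}" "w \<in> set (Ls (Suc i))" "lab w = (B, R, False)" "b \<in> B"
      by blast
    have "lev b \<le> i" using lab_lev[OF h(2)] h(3,4) by simp
    moreover have "lev w = Suc i" using h(2) lev by simp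
    ultimately have "x = b \<and> y = w" using h(1) assms(2) by (auto simp: doubleton_eq_iff)
    then show ?thesis using h by auto
  qed
qed

lemma E1R:
  assumes "{x, y} \<in> ER" "lev x < lev y"
  shows "\<exists>i. y \<in> set (Ls (Suc i)) \<and> x \<in> lR y \<and> \<not> lP y"
proof -
  obtain w b i B R where h: "{x, y} = {w, b}" "w \<in> set (Ls (Suc i))" "lab w = (B, R, False)" "b \<in> R"
    using assms(1) ERdef by blast
  have "lev b \<le> i" using lab_lev[OF h(2)] h(3,4) by simp
  moreover have "lev w = Suc i" using h(2) lev by simp
  ultimately have "x = b \<and> y = w" using h(1) assms(2) by (auto simp: doubleton_eq_iff)
  then show ?thesis using h by auto
qed

lemma EB_lab: "w \<in> set (Ls (Suc i)) \<Longrightarrow> lab w = (B, R, False) \<Longrightarrow> b \<in> B \<Longrightarrow> {w, b} \<in> EB"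
  unfolding EBdef by (rule UnI2, rule CollectI, intro exI conjI, rule refl, assumption+)

lemma ER_lab: "w \<in> set (Ls (Suc i)) \<Longrightarrow> lab w = (B, R, False) \<Longrightarrow> r \<in> R \<Longrightarrow> {w, r} \<in> ER"
  unfolding ERdef by (rule CollectI, intro exI conjI, rule refl, assumption+)

lemma E2: assumes "y \<in> set (Ls (Suc i))" "\<not> lP y" "x \<in> lB y" shows "{x, y} \<in> EB"
proof -
  have "lab y = (lB y, lR y, False)" using assms by (cases "lab y") auto
  then have "{y, x} \<in> EB" using assms(1,3) EB_lab by metis
  then show ?thesis by (simp add: insert_commute)
qed

lemma E2R: assumes "y \<in> set (Ls (Suc i))" "\<not> lP y" "x \<in> lR y" shows "{x, y} \<in> ER"
proof -
  have "lab y = (lB y, lR y, False)" using assms by (cases "lab y") auto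
  then have "{y, x} \<in> ER" using assms(1,3) ER_lab by metis
  then show ?thesis by (simp add: insert_commute)
qed

lemma edge_lev_cases:
  assumes "{x, y} \<in> EB \<union> ER"
  shows "lev x = lev y \<and> (\<exists>i k. Suc k < length (Ls i) \<and> {x, y} = {Ls i ! k, Ls i ! Suc k})
     \<or> (lev x < lev y \<and> (\<exists>i. y \<in> set (Ls (Suc i)) \<and> x \<in> lB y \<union> lR y \<and> \<not> lP y))
     \<or> (lev y < lev x \<and> (\<exists>i. x \<in> set (Ls (Suc i)) \<and> y \<in> lB x \<union> lR x \<and> \<not> lP x))"
proof -
  have "(\<exists>i k. Suc k < length (Ls i) \<and> {x, y} = {Ls i ! k, Ls i ! Suc k}) \<or>
        (\<exists>w b i B R. {x, y} = {w, b} \<and> w \<in> set (Ls (Suc i)) \<and> lab w = (B, R, False) \<and> (b \<in> B \<or> b \<in> R))"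
    using assms EBdef ERdef by blast
  then show ?thesis
  proof
    assume "\<exists>i k. Suc k < length (Ls i) \<and> {x, y} = {Ls i ! k, Ls i ! Suc k}"
    then obtain i k where ik: "Suc k < length (Ls i)" "{x, y} = {Ls i ! k, Ls i ! Suc k}" by blast
    then have "x \<in> set (Ls i)" "y \<in> set (Ls i)"
      by (metis Suc_lessD doubleton_eq_iff nth_mem)+
    then show ?thesis using ik lev by auto
  next
    assume "\<exists>w b i B R. {x, y} = {w, b} \<and> w \<in> set (Ls (Suc i)) \<and> lab w = (B, R, False) \<and> (b \<in> B \<or> b \<in> R)"
    then obtain w b i B R where h: "{x, y} = {w, b}" "w \<in> set (Ls (Suc i))" "lab w = (B, R, False)" "b \<in> B \<or> b \<in> R"
      by blast
    have "lev b \<le> i" using lab_lev[OF h(2)] h(3,4) by auto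
    moreover have "lev w = Suc i" using h(2) lev by simp
    ultimately show ?thesis using h by (auto simp: doubleton_eq_iff)
  qed
qed

lemma anc_lev: "y \<in> set (Ls j) \<Longrightarrow> k \<le> j \<Longrightarrow> (par ^^ k) y \<in> set (Ls (j - k))"
proof (induction k)
  case 0 then show ?case by simp
next
  case (Suc k)
  then have "(par ^^ k) y \<in> set (Ls (Suc (j - Suc k)))" by (simp add: Suc_diff_Suc)
  then show ?case using succ_props(1) by simp
qed

lemma Nup_anc: "u \<in> set (Ls i) \<Longrightarrow> x \<in> Nup Ls EB ER i u \<Longrightarrow> x = (par ^^ (i - lev x)) u"
proof (induction i arbitrary: u x)
  case 0
  then show ?case using Nup_cases[OF 0(2)] by auto
next
  case (Suc i)
  show ?case
  proof (cases "x = u")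
    case True then show ?thesis using Suc.prems lev by simp
  next
    case False
    then obtain j where j: "j < Suc i" "x \<in> set (Ls j)" "{u, x} \<in> EB \<union> ER"
      using Suc.prems(2) unfolding Nup_def by auto
    have lx: "lev x = j" using j lev by simp
    have lu: "lev u = Suc i" using Suc.prems lev by simp
    have e: "{x, u} \<in> EB \<union> ER" using j(3) by (simp add: insert_commute)
    have "x \<in> lB u \<union> lR u"
      using e E1[of x u] E1R[of x u] lx lu j(1) by auto
    then have "x \<in> Nup Ls EB ER i (par u)" using lab_adm[OF Suc.prems(1)] by auto
    then have "x = (par ^^ (i - lev x)) (par u)" by (rule Suc.IH[OF succ_props(1)[OF Suc.prems(1)]])
    then have "x = (par ^^ (i - j)) (par u)" using lx by simp
    also have "\<dots> = (par ^^ (Suc i - j)) u" using j(1)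
      by (simp add: Suc_diff_le funpow_Suc_right del: funpow.simps)
    finally show ?thesis using lx by simp
  qed
qed

lemma consec_iter:
  assumes "Suc k < length (Ls j)" "d \<le> j"
  shows "(par ^^ d) (Ls j ! k) = (par ^^ d) (Ls j ! Suc k) \<or>
    (\<exists>m. Suc m < length (Ls (j - d)) \<and> (par ^^ d) (Ls j ! k) = Ls (j - d) ! m \<and> (par ^^ d) (Ls j ! Suc k) = Ls (j - d) ! Suc m)"
  using assms(2)
proof (induction d)
  case 0 then show ?case using assms(1) by auto
next
  case (Suc d)
  then have IH: "(par ^^ d) (Ls j ! k) = (par ^^ d) (Ls j ! Suc k) \<or>
    (\<exists>m. Suc m < length (Ls (Suc (j - Suc d))) \<and> (par ^^ d) (Ls j ! k) = Ls (Suc (j - Suc d)) ! m \<and> (par ^^ d) (Ls j ! Suc k) = Ls (Suc (j - Suc d)) ! Suc m)"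
    by (simp add: Suc_diff_Suc)
  then show ?case
  proof
    assume "(par ^^ d) (Ls j ! k) = (par ^^ d) (Ls j ! Suc k)"
    then show ?thesis by simp
  next
    assume "\<exists>m. Suc m < length (Ls (Suc (j - Suc d))) \<and> (par ^^ d) (Ls j ! k) = Ls (Suc (j - Suc d)) ! m \<and> (par ^^ d) (Ls j ! Suc k) = Ls (Suc (j - Suc d)) ! Suc m"
    then obtain m where m: "Suc m < length (Ls (Suc (j - Suc d)))" "(par ^^ d) (Ls j ! k) = Ls (Suc (j - Suc d)) ! m"
      "(par ^^ d) (Ls j ! Suc k) = Ls (Suc (j - Suc d)) ! Suc m" by blast
    show ?thesis using consec_layer[OF m(1)] m(2,3) by simp
  qed
qed

definition beloweq where "beloweq w y \<longleftrightarrow> y \<in> V \<and> lev w \<le> lev y \<and> (par ^^ (lev y - lev w)) y = w"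

lemma beloweq_refl: "w \<in> V \<Longrightarrow> beloweq w w" unfolding beloweq_def by simp

lemma beloweq_lev:
  assumes "beloweq w y" "w \<in> V"
  shows "lev w \<le> lev y"
  using assms unfolding beloweq_def by simp

lemma treesep_lt:
  assumes "lev w1 = lev w2" "w1 \<noteq> w2" "beloweq w1 y" "beloweq w2 z" "lev y < lev z"
  shows "{y, z} \<notin> EB \<union> ER"
proof
  assume e: "{y, z} \<in> EB \<union> ER"
  obtain i where i: "z \<in> set (Ls (Suc i))" "y \<in> lB z \<union> lR z"
    using edge_lev_cases[OF e] assms(5) by auto
  have lz: "lev z = Suc i" using i lev by simp
  have "y \<in> Nup Ls EB ER i (par z)" using lab_adm[OF i(1)] i(2) by auto
  then have "y = (par ^^ (i - lev y)) (par z)" using Nup_anc succ_props(1)[OF i(1)] by blast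
  also have "\<dots> = (par ^^ (lev z - lev y)) z" using lz assms(5)
    by (simp add: Suc_diff_le funpow_Suc_right del: funpow.simps)
  finally have yz: "y = (par ^^ (lev z - lev y)) z" .
  have "w1 = (par ^^ (lev y - lev w1)) y" using assms(3) unfolding beloweq_def by simp
  also have "\<dots> = (par ^^ (lev y - lev w1 + (lev z - lev y))) z" using yz by (simp add: funpow_add)
  also have "lev y - lev w1 + (lev z - lev y) = lev z - lev w2"
    using assms(1,3,5) unfolding beloweq_def by simp
  also have "(par ^^ (lev z - lev w2)) z = w2" using assms(4) unfolding beloweq_def by simp
  finally show False using assms(2) by simp
qed

lemma treesep_eq:
  assumes "lev w1 = lev w2" "w1 \<noteq> w2" "beloweq w1 y" "beloweq w2 z" "lev y = lev z"
    "lev w1 \<ge> 1" "\<not> lP w1" "\<not> lP w2" "w1 \<in> V" "w2 \<in> V"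
  shows "{y, z} \<notin> EB \<union> ER"
proof
  assume e: "{y, z} \<in> EB \<union> ER"
  obtain i k where ik: "Suc k < length (Ls i)" "{y, z} = {Ls i ! k, Ls i ! Suc k}"
    using edge_lev_cases[OF e] assms(5) by auto
  have yi: "y \<in> set (Ls i)" using ik by (metis Suc_lessD doubleton_eq_iff nth_mem)
  then have ly: "lev y = i" using lev by simp
  define d where "d = i - lev w1"
  have dle: "d \<le> i" unfolding d_def by simp
  have l1: "lev w1 \<le> i" using assms(3) ly unfolding beloweq_def by simp
  have w1: "(par ^^ d) y = w1" using assms(3) ly unfolding beloweq_def d_def by simp
  have w2: "(par ^^ d) z = w2" using assms(4,5,1) ly unfolding beloweq_def d_def by simp
  have jd: "i - d = lev w1" using l1 unfolding d_def by simp
  have "\<exists>m. Suc m < length (Ls (lev w1)) \<and> ((w1 = Ls (lev w1) ! m \<and> w2 = Ls (lev w1) ! Suc m) \<or> (w2 = Ls (lev w1) ! m \<and> w1 = Ls (lev w1) ! Suc m))"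
    using consec_iter[OF ik(1) dle] ik(2) w1 w2 assms(2) jd by (auto simp: doubleton_eq_iff)
  then obtain m where m: "Suc m < length (Ls (lev w1))"
     "(w1 = Ls (lev w1) ! m \<and> w2 = Ls (lev w1) ! Suc m) \<or> (w2 = Ls (lev w1) ! m \<and> w1 = Ls (lev w1) ! Suc m)" by blast
  obtain l where l: "lev w1 = Suc l" using assms(6) by (cases "lev w1") auto
  have "lP (Ls (Suc l) ! m) = odd m" "lP (Ls (Suc l) ! Suc m) = odd (Suc m)"
    using parity m(1) l by auto
  then show False using m(2) assms(7,8) l by auto
qed

lemma treesep:
  assumes "lev w1 = lev w2" "w1 \<noteq> w2" "beloweq w1 y" "beloweq w2 z"
    "lev w1 \<ge> 1" "\<not> lP w1" "\<not> lP w2" "w1 \<in> V" "w2 \<in> V"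
  shows "{y, z} \<notin> EB \<union> ER" "y \<noteq> z"
proof -
  show "{y, z} \<notin> EB \<union> ER"
  proof (cases "lev y < lev z")
    case True then show ?thesis using treesep_lt assms by blast
  next
    case False
    show ?thesis
    proof (cases "lev y = lev z")
      case True then show ?thesis using treesep_eq assms by blast
    next
      case False2: False
      then have "lev z < lev y" using False by simp
      then have "{z, y} \<notin> EB \<union> ER" using treesep_lt[of w2 w1 z y] assms by auto
      then show ?thesis by (simp add: insert_commute)
    qed
  qed
  show "y \<noteq> z"
    using assms(1-4) unfolding beloweq_def by auto
qed

end

lemma succ_nth: "successively P xs \<longleftrightarrow> (\<forall>i. Suc i < length xs \<longrightarrow> P (xs ! i) (xs ! Suc i))"
proof (induction P xs rule: successively.induct)
  case (3 P x y xs)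
  show ?case
  proof
    assume "successively P (x # y # xs)"
    then show "\<forall>i. Suc i < length (x # y # xs) \<longrightarrow> P ((x # y # xs) ! i) ((x # y # xs) ! Suc i)"
      using 3 by (auto simp: nth_Cons split: nat.splits)
  next
    assume h: "\<forall>i. Suc i < length (x # y # xs) \<longrightarrow> P ((x # y # xs) ! i) ((x # y # xs) ! Suc i)"
    have "P x y" using h[rule_format, of 0] by simp
    moreover have "\<forall>i. Suc i < length (y # xs) \<longrightarrow> P ((y # xs) ! i) ((y # xs) ! Suc i)"
      using h by (metis Suc_less_eq length_Cons nth_Cons_Suc)
    ultimately show "successively P (x # y # xs)" using 3 by simp
  qed
qed auto

lemma succ_take: "successively P xs \<Longrightarrow> successively P (take n xs)"
  by (simp add: succ_nth)

lemma succ_drop: "successively P xs \<Longrightarrow> successively P (drop n xs)"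
  by (simp add: succ_nth)

locale hg =
  fixes VH :: "'h set" and EBH ERH :: "'h set set"
  assumes trig: "trigraph VH EBH ERH" and finH: "finite VH"
    and chord: "chordal_trigraph VH EBH ERH"
begin

definition adj where "adj a b \<longleftrightarrow> {a, b} \<in> EBH \<union> ERH"

lemma adj_sym: "adj a b \<longleftrightarrow> adj b a" unfolding adj_def by (simp add: insert_commute)

lemma adj_props: assumes "adj a b" shows "a \<noteq> b" "a \<in> VH" "b \<in> VH"
proof -
  obtain x y where "x \<noteq> y" "x \<in> VH" "y \<in> VH" "{a, b} = {x, y}"
    using assms trig unfolding adj_def trigraph_def by blast
  then show "a \<noteq> b" "a \<in> VH" "b \<in> VH" by (auto simp: doubleton_eq_iff)
qed

lemma disjH: "EBH \<inter> ERH = {}" using trig unfolding trigraph_def by simp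

definition ipath where
  "ipath Q \<longleftrightarrow> distinct Q \<and> (\<forall>i j. i < j \<longrightarrow> j < length Q \<longrightarrow> (adj (Q ! i) (Q ! j) \<longleftrightarrow> j = Suc i))"

lemma ipath_drop: "ipath P \<Longrightarrow> ipath (drop j P)"
  unfolding ipath_def by auto

lemma ipath_Cons:
  assumes "ipath D" "y \<notin> set D" "D \<noteq> []" "adj y (D ! 0)" "\<forall>k. 0 < k \<longrightarrow> k < length D \<longrightarrow> \<not> adj y (D ! k)"
  shows "ipath (y # D)"
  unfolding ipath_def
proof (intro conjI allI impI)
  show "distinct (y # D)" using assms(1,2) unfolding ipath_def by simp
next
  fix i j assume ij: "i < j" "j < length (y # D)"
  then obtain j' where j': "j = Suc j'" by (cases j) auto
  show "adj ((y # D) ! i) ((y # D) ! j) = (j = Suc i)"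
  proof (cases i)
    case 0
    then show ?thesis using assms(4,5) ij j' by (cases j') auto
  next
    case (Suc i')
    then show ?thesis using assms(1) ij j' unfolding ipath_def by auto
  qed
qed

lemma cycle_lemma:
  assumes "ipath Q" "length Q \<ge> 3" "x \<notin> set Q" "x \<in> VH" "set Q \<subseteq> VH"
    "\<forall>i<length Q. adj x (Q ! i) \<longleftrightarrow> (i = 0 \<or> i = length Q - 1)"
  shows "induced_long_cycle VH (EBH \<union> ERH) (x # Q)"
proof -
  define L where "L = length (x # Q)"
  have aux: "adj ((x # Q) ! i) ((x # Q) ! j) \<longleftrightarrow> (j = Suc i \<or> (i = 0 \<and> j = L - 1))"
    if ij: "i < j" "j < L" for i j
  proof -
    obtain j' where j': "j = Suc j'" using ij by (cases j) auto
    show ?thesis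
    proof (cases i)
      case 0
      then show ?thesis using assms(6) ij j' unfolding L_def by auto
    next
      case (Suc i')
      then show ?thesis using assms(1) ij j' unfolding ipath_def L_def by auto
    qed
  qed
  have "({(x # Q) ! i, (x # Q) ! j} \<in> EBH \<union> ERH) = (j = Suc i mod L \<or> i = Suc j mod L)"
    if "i < L" "j < L" "i \<noteq> j" for i j
  proof (cases "i < j")
    case True
    have "Suc i mod L = Suc i" using True that by simp
    moreover have "(i = Suc j mod L) \<longleftrightarrow> (i = 0 \<and> j = L - 1)"
      using True that by (cases "Suc j = L") auto
    ultimately show ?thesis using aux[OF True that(2)] unfolding adj_def by auto
  next
    case False
    then have ji: "j < i" using that by simp
    have "Suc j mod L = Suc j" using ji that by simp
    moreover have "(j = Suc i mod L) \<longleftrightarrow> (j = 0 \<and> i = L - 1)"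
      using ji that by (cases "Suc i = L") auto
    ultimately show ?thesis using aux[OF ji that(1)] unfolding adj_def by (auto simp: insert_commute)
  qed
  moreover have "length (x # Q) \<ge> 4" using assms(2) by simp
  moreover have "distinct (x # Q)" using assms(1,3) unfolding ipath_def by simp
  moreover have "set (x # Q) \<subseteq> VH" using assms(4,5) by simp
  ultimately show ?thesis unfolding induced_long_cycle_def L_def by blast
qed

lemma no_cycle: "\<not> induced_long_cycle VH (EBH \<union> ERH) xs"
  using chord unfolding chordal_trigraph_def chordal_graph_def by blast

definition rel where "rel S = {(p, q). p \<in> S \<and> q \<in> S \<and> adj p q}"
definition cmp where "cmp S b = {x. (b, x) \<in> (rel S)\<^sup>*}"

lemma rel_sym: "(rel S)\<inverse> = rel S" unfolding rel_def by (auto simp: adj_sym)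

lemma rtrancl_sym: "(a, b) \<in> (rel S)\<^sup>* \<Longrightarrow> (b, a) \<in> (rel S)\<^sup>*"
  by (metis rel_sym rtrancl_converseI)

lemma comp_self: "b \<in> cmp S b" unfolding cmp_def by simp

lemma comp_sub: "b \<in> S \<Longrightarrow> cmp S b \<subseteq> S"
proof
  fix x assume "b \<in> S" "x \<in> cmp S b"
  then have "(b, x) \<in> (rel S)\<^sup>*" unfolding cmp_def by simp
  then show "x \<in> S" using \<open>b \<in> S\<close> by (induction rule: rtrancl_induct) (auto simp: rel_def)
qed

lemma comp_eq: "x \<in> cmp S b \<Longrightarrow> cmp S x = cmp S b"
  unfolding cmp_def using rtrancl_sym by (blast intro: rtrancl_trans)

lemma comp_adj: "x \<in> cmp S b \<Longrightarrow> x \<in> S \<Longrightarrow> y \<in> S \<Longrightarrow> adj x y \<Longrightarrow> y \<in> cmp S b"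
  unfolding cmp_def rel_def by (auto intro: rtrancl_into_rtrancl)

lemma rtrancl_walk:
  assumes "(v, c) \<in> (rel S)\<^sup>*" "v \<in> S"
  shows "\<exists>P. P \<noteq> [] \<and> hd P = v \<and> last P = c \<and> successively adj P \<and> set P \<subseteq> S"
  using assms(1)
proof (induction rule: rtrancl_induct)
  case base then show ?case using assms(2) by (intro exI[of _ "[v]"]) auto
next
  case (step y z)
  then obtain P where P: "P \<noteq> []" "hd P = v" "last P = y" "successively adj P" "set P \<subseteq> S" by blast
  have "successively adj (P @ [z])" using P step(2) by (auto simp: successively_append_iff rel_def)
  then show ?case using P step(2) by (intro exI[of _ "P @ [z]"]) (auto simp: rel_def)
qed

lemma walk_in_comp:
  "successively adj W \<Longrightarrow> set W \<subseteq> S \<Longrightarrow> W \<noteq> [] \<Longrightarrow> hd W \<in> cmp S b \<Longrightarrow> set W \<subseteq> cmp S b"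
proof (induction W rule: induct_list012)
  case (3 x y zs)
  have "y \<in> cmp S b" using 3(3-6) comp_adj[of x S b y] by simp
  then have "set (y # zs) \<subseteq> cmp S b" using 3(2,3,4) by simp
  then show ?case using 3(6) by simp
qed auto

definition clique where "clique K \<longleftrightarrow> (\<forall>a\<in>K. \<forall>b\<in>K. a \<noteq> b \<longrightarrow> adj a b)"

end

lemma last_take_Suc: "i < length xs \<Longrightarrow> last (take (Suc i) xs) = xs ! i"
  by (simp add: take_Suc_conv_app_nth)

context hg begin

lemma min_walk_props:
  assumes "P \<noteq> []" "hd P = v" "successively adj P" "set P \<subseteq> S" "adj (last P) x"
    and min: "\<forall>P'. P' \<noteq> [] \<and> hd P' = v \<and> successively adj P' \<and> set P' \<subseteq> S \<and> adj (last P') x \<longrightarrow> length P \<le> length P'"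
  shows "\<forall>i. Suc i < length P \<longrightarrow> \<not> adj (P ! i) x" "ipath P"
proof -
  show "\<forall>i. Suc i < length P \<longrightarrow> \<not> adj (P ! i) x"
  proof (intro allI impI notI)
    fix i assume i: "Suc i < length P" "adj (P ! i) x"
    define P' where "P' = take (Suc i) P"
    have "P' \<noteq> []" "hd P' = v" "successively adj P'" "set P' \<subseteq> S" "adj (last P') x"
      using assms i unfolding P'_def by (auto simp: succ_take last_take_Suc dest: in_set_takeD)
    then have "length P \<le> length P'" using min by blast
    then show False using i unfolding P'_def by simp
  qed
  have chordless: "\<not> adj (P ! i) (P ! j)" if "Suc i < j" "j < length P" for i j
  proof
    assume a: "adj (P ! i) (P ! j)"
    define P' where "P' = take (Suc i) P @ drop j P"
    have tk: "take (Suc i) P \<noteq> []" "last (take (Suc i) P) = P ! i" "hd (take (Suc i) P) = hd P"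
      using that assms(1) by (auto simp: last_take_Suc)
    have dr: "drop j P \<noteq> []" "hd (drop j P) = P ! j" "last (drop j P) = last P"
      using that by (auto simp: hd_drop_conv_nth)
    have "successively adj P'" unfolding P'_def using tk dr a assms(3)
      by (auto simp: successively_append_iff succ_take succ_drop)
    moreover have "P' \<noteq> []" "hd P' = v" "set P' \<subseteq> S" "adj (last P') x"
      using tk dr assms unfolding P'_def by (auto dest: in_set_takeD in_set_dropD)
    ultimately have "length P \<le> length P'" using min by blast
    then show False using that unfolding P'_def by simp
  qed
  have dist: "distinct P"
  proof (rule ccontr)
    assume "\<not> distinct P"
    then obtain i j where ij: "i < j" "j < length P" "P ! i = P ! j"
      by (metis distinct_conv_nth linorder_neqE_nat)
    define P' where "P' = take i P @ drop j P"
    have dr: "drop j P \<noteq> []" "hd (drop j P) = P ! j" "last (drop j P) = last P"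
      using ij by (auto simp: hd_drop_conv_nth)
    have sP': "successively adj P'"
    proof (cases i)
      case 0 then show ?thesis unfolding P'_def using assms(3) by (simp add: succ_drop)
    next
      case (Suc i')
      have "last (take i P) = P ! i'" using Suc ij by (simp add: last_take_Suc)
      moreover have "Suc i' < length P" using Suc ij by simp
      then have "adj (P ! i') (P ! Suc i')" using assms(3) unfolding succ_nth by blast
      then have "adj (P ! i') (P ! i)" using Suc by simp
      ultimately show ?thesis unfolding P'_def using dr ij assms(3) Suc
        by (auto simp: successively_append_iff succ_take succ_drop)
    qed
    have hP': "hd P' = v"
    proof (cases i)
      case 0 then show ?thesis unfolding P'_def using dr ij assms(1,2) by (simp add: hd_conv_nth)
    next
      case (Suc i') then show ?thesis unfolding P'_def using ij assms(1,2) by simp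
    qed
    have "P' \<noteq> []" "set P' \<subseteq> S" "adj (last P') x"
      using dr assms unfolding P'_def by (auto dest: in_set_takeD in_set_dropD)
    then have "length P \<le> length P'" using min sP' hP' by blast
    then show False using ij unfolding P'_def by simp
  qed
  show "ipath P" unfolding ipath_def
  proof (intro conjI allI impI dist)
    fix i j assume ij: "i < j" "j < length P"
    show "adj (P ! i) (P ! j) \<longleftrightarrow> j = Suc i"
    proof
      assume "adj (P ! i) (P ! j)" then show "j = Suc i" using chordless ij by (metis Suc_lessI)
    next
      assume "j = Suc i" then show "adj (P ! i) (P ! j)" using assms(3) ij unfolding succ_nth by simp
    qed
  qed
qed

lemma complete_vertex:
  assumes K: "K \<subseteq> VH" "clique K" and S: "S \<inter> K = {}" "S \<subseteq> VH" and b: "b \<in> S"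
  shows "\<exists>v\<in>cmp S b. \<forall>a\<in>K. (\<exists>c\<in>cmp S b. adj c a) \<longrightarrow> adj v a"
proof -
  define C where "C = cmp S b"
  define A where "A = {a\<in>K. \<exists>c\<in>C. adj c a}"
  define f where "f v = card {a\<in>A. adj v a}" for v
  have CS: "C \<subseteq> S" unfolding C_def using comp_sub b by simp
  have finC: "finite C" by (rule finite_subset[OF _ finH]) (use CS S(2) in blast)
  have finA: "finite A" by (rule finite_subset[OF _ finH]) (use K(1) in \<open>auto simp: A_def\<close>)
  have "b \<in> C" unfolding C_def by (rule comp_self)
  then have ne: "f ` C \<noteq> {}" by blast
  obtain v where v: "v \<in> C" "f v = Max (f ` C)" using Max_in[OF finite_imageI[OF finC] ne] by auto
  have vmax: "\<forall>v'\<in>C. f v' \<le> f v" using v finC by simp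
  have "\<forall>a\<in>A. adj v a"
  proof (rule ccontr)
    assume "\<not> (\<forall>a\<in>A. adj v a)"
    then obtain x where x: "x \<in> A" "\<not> adj v x" by blast
    then obtain c where c: "c \<in> C" "adj c x" unfolding A_def by blast
    have xK: "x \<in> K" using x A_def by simp
    have vS: "v \<in> S" using v CS by blast
    have "(b, v) \<in> (rel S)\<^sup>*" "(b, c) \<in> (rel S)\<^sup>*" using v c unfolding C_def cmp_def by auto
    then have "(v, c) \<in> (rel S)\<^sup>*" using rtrancl_sym rtrancl_trans by metis
    then obtain P0 where P0: "P0 \<noteq> []" "hd P0 = v" "last P0 = c" "successively adj P0" "set P0 \<subseteq> S"
      using rtrancl_walk vS by blast
    define W where "W P \<longleftrightarrow> P \<noteq> [] \<and> hd P = v \<and> successively adj P \<and> set P \<subseteq> S \<and> adj (last P) x" for P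
    have "W P0" unfolding W_def using P0 c by simp
    then obtain P where P: "W P" and Pmin: "\<forall>P'. W P' \<longrightarrow> length P \<le> length P'"
      using ex_has_least_nat[of W P0 length] by blast
    have Pp: "P \<noteq> []" "hd P = v" "successively adj P" "set P \<subseteq> S" "adj (last P) x"
      using P unfolding W_def by auto
    have m1: "\<forall>i. Suc i < length P \<longrightarrow> \<not> adj (P ! i) x" and ip: "ipath P"
      using min_walk_props[OF Pp] Pmin unfolding W_def by blast+
    have PC: "set P \<subseteq> C" unfolding C_def using walk_in_comp[OF Pp(3,4,1)] Pp(2) v(1) C_def by simp
    have P0v: "P ! 0 = v" using Pp(1,2) by (simp add: hd_conv_nth)
    have lastP: "last P = P ! (length P - 1)" using Pp(1) by (simp add: last_conv_nth)
    have lenP: "length P \<ge> 2"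
    proof (rule ccontr)
      assume "\<not> length P \<ge> 2"
      then have "length P = 1" using Pp(1) by (cases P) (auto simp: Suc_le_eq)
      then have "last P = v" using lastP P0v by simp
      then show False using Pp(5) x(2) by simp
    qed
    have sub: "\<forall>y\<in>A. adj v y \<longrightarrow> adj (last P) y"
    proof (intro ballI impI, rule ccontr)
      fix y assume y: "y \<in> A" "adj v y" "\<not> adj (last P) y"
      have yK: "y \<in> K" using y A_def by simp
      define J where "J = {i. i < length P \<and> adj (P ! i) y}"
      have "0 \<in> J" unfolding J_def using P0v y(2) Pp(1) by simp
      have finJ: "finite J" unfolding J_def by simp
      define j where "j = Max J"
      have jJ: "j \<in> J" unfolding j_def using finJ \<open>0 \<in> J\<close> Max_in by blast
      have jmax: "\<forall>k\<in>J. k \<le> j" unfolding j_def using finJ by simp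
      have jlt: "j < length P - 1"
      proof -
        have "j < length P" using jJ J_def by simp
        moreover have "j \<noteq> length P - 1" using jJ y(3) lastP unfolding J_def by auto
        ultimately show ?thesis by simp
      qed
      define D where "D = drop j P"
      define Q where "Q = y # D"
      have lenD: "length D = length P - j" unfolding D_def by simp
      have D0: "D ! 0 = P ! j" unfolding D_def using jlt by simp
      have Dk: "D ! k = P ! (j + k)" if "k < length D" for k unfolding D_def using that jlt by simp
      have yP: "y \<notin> set P" using yK Pp(4) S(1) by blast
      have xP: "x \<notin> set P" using xK Pp(4) S(1) by blast
      have xy: "x \<noteq> y" using x(2) y(2) by blast
      have ipQ: "ipath Q" unfolding Q_def
      proof (rule ipath_Cons)
        show "ipath D" unfolding D_def using ip by (rule ipath_drop)
        show "y \<notin> set D" unfolding D_def using yP by (auto dest: in_set_dropD)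
        show "D \<noteq> []" unfolding D_def using jlt by simp
        show "adj y (D ! 0)" using D0 jJ J_def adj_sym by simp
        show "\<forall>k. 0 < k \<longrightarrow> k < length D \<longrightarrow> \<not> adj y (D ! k)"
        proof (intro allI impI notI)
          fix k assume k: "0 < k" "k < length D" "adj y (D ! k)"
          then have "j + k \<in> J" unfolding J_def using Dk lenD adj_sym by auto
          then show False using jmax k by fastforce
        qed
      qed
      have lenQ: "length Q \<ge> 3" unfolding Q_def using lenD jlt by simp
      have cyc: "induced_long_cycle VH (EBH \<union> ERH) (x # Q)"
      proof (rule cycle_lemma[OF ipQ lenQ])
        show "x \<notin> set Q" unfolding Q_def D_def using xP xy by (auto dest: in_set_dropD)
        show "x \<in> VH" using xK K by blast
        show "set Q \<subseteq> VH" unfolding Q_def D_def using yK K Pp(4) S(2) by (auto dest: in_set_dropD)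
        show "\<forall>i<length Q. adj x (Q ! i) = (i = 0 \<or> i = length Q - 1)"
        proof (intro allI impI)
          fix i assume i: "i < length Q"
          show "adj x (Q ! i) = (i = 0 \<or> i = length Q - 1)"
          proof (cases i)
            case 0
            then show ?thesis using K(2) xK yK xy unfolding Q_def clique_def by simp
          next
            case (Suc k)
            then have k: "k < length D" using i unfolding Q_def by simp
            have Qi: "Q ! i = P ! (j + k)" using Suc Dk[OF k] unfolding Q_def by simp
            show ?thesis
            proof (cases "j + k = length P - 1")
              case True
              then have "adj x (Q ! i)" using Qi lastP Pp(5) adj_sym by simp
              moreover have "i = length Q - 1" using True Suc lenD jlt unfolding Q_def by simp
              ultimately show ?thesis by simp
            next
              case False
              then have "Suc (j + k) < length P" using k lenD by simp
              then have "\<not> adj x (Q ! i)" using m1 Qi adj_sym by metis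
              moreover have "i \<noteq> length Q - 1" using False Suc lenD jlt unfolding Q_def by simp
              ultimately show ?thesis using Suc by simp
            qed
          qed
        qed
      qed
      then show False using no_cycle by blast
    qed
    have lastC: "last P \<in> C" using PC Pp(1) last_in_set by blast
    have "{a\<in>A. adj v a} \<subset> {a\<in>A. adj (last P) a}"
      using sub x Pp(5) adj_sym by blast
    then have "f v < f (last P)" unfolding f_def using finA by (intro psubset_card_mono) auto
    then show False using vmax lastC by fastforce
  qed
  then show ?thesis using v(1) unfolding A_def C_def by blast
qed

end

locale mn = gtc t V root Ls par lab EB ER + hg VH EBH ERH
  for t :: nat and V :: "'v set" and root :: 'v and Ls :: "nat \<Rightarrow> 'v list" and par :: "'v \<Rightarrow> 'v"
    and lab :: "'v \<Rightarrow> 'v set \<times> 'v set \<times> bool" and EB ER :: "'v set set"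
    and VH :: "'h set" and EBH ERH :: "'h set set" +
  fixes X :: "'v set"
  assumes clq: "clique_number_le VH (EBH \<union> ERH) (t + 1)" and tf: "triangle_free VH EBH" and XV: "X \<subseteq> V"
begin

definition tpres where
  "tpres f D \<longleftrightarrow> (\<forall>a\<in>D. \<forall>b\<in>D. a \<noteq> b \<longrightarrow> ({f a, f b} \<in> EB \<longleftrightarrow> {a, b} \<in> EBH) \<and> ({f a, f b} \<in> ER \<longleftrightarrow> {a, b} \<in> ERH))"

definition below where "below c y \<longleftrightarrow> beloweq c y \<and> lev c < lev y"

definition cfg where
  "cfg c K S g \<longleftrightarrow> c \<in> V \<and> K \<subseteq> VH \<and> S \<subseteq> VH \<and> K \<inter> S = {} \<and> clique K \<and>
     (\<forall>a\<in>S. \<forall>b. adj a b \<longrightarrow> b \<in> K \<union> S) \<and> inj_on g K \<and> g ` K \<subseteq> X \<and>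
     g ` K \<subseteq> Nup Ls EB ER (lev c) c \<and> tpres g K"

definition good where
  "good c K S g \<longleftrightarrow> (\<exists>f. (\<forall>a\<in>K. f a = g a) \<and> inj_on f (K \<union> S) \<and> f ` S \<subseteq> X \<and>
     (\<forall>b\<in>S. below c (f b)) \<and> tpres f (K \<union> S) \<and>
     (\<forall>b\<in>S. \<forall>z. lev z \<le> lev c \<longrightarrow> z \<notin> g ` K \<longrightarrow> {f b, z} \<notin> EB \<union> ER))"

definition hdc where
  "hdc K S b = (SOME v. v \<in> cmp S b \<and> (\<forall>a\<in>K. (\<exists>x\<in>cmp S b. adj x a) \<longrightarrow> adj v a))"

definition lbl where
  "lbl K S b = ({a\<in>K. {hdc K S b, a} \<in> EBH}, {a\<in>K. {hdc K S b, a} \<in> ERH})"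

definition grp where "grp K S l = {b\<in>S. lbl K S b = l}"

definition chld where
  "chld c g l = (SOME w. w \<in> set (Ls (Suc (lev c))) \<and> par w = c \<and> lab w = (g ` fst l, g ` snd l, False))"

definition GR where
  "GR c K S g l f \<longleftrightarrow> (\<forall>a\<in>K. f a = g a) \<and> inj_on f (K \<union> grp K S l) \<and> f ` grp K S l \<subseteq> X \<and>
     (\<forall>b\<in>grp K S l. beloweq (chld c g l) (f b)) \<and> tpres f (K \<union> grp K S l) \<and>
     (\<forall>b\<in>grp K S l. \<forall>z. lev z \<le> lev c \<longrightarrow> z \<notin> g ` K \<longrightarrow> {f b, z} \<notin> EB \<union> ER)"

lemma tpres_sym: "tpres f D \<Longrightarrow> a \<in> D \<Longrightarrow> b \<in> D \<Longrightarrow> a \<noteq> b \<Longrightarrow>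
   ({f a, f b} \<in> EB \<longleftrightarrow> {a, b} \<in> EBH) \<and> ({f a, f b} \<in> ER \<longleftrightarrow> {a, b} \<in> ERH)"
  unfolding tpres_def by blast

lemma lev_Nup: "c \<in> V \<Longrightarrow> x \<in> Nup Ls EB ER (lev c) c \<Longrightarrow> x \<in> V \<and> lev x \<le> lev c"
  using Nup_lev V_lev by blast

lemma beloweq_child:
  assumes "w \<in> set (Ls (Suc (lev c)))" "par w = c" "beloweq w y"
  shows "below c y"
proof -
  have lw: "lev w = Suc (lev c)" using assms(1) lev by simp
  have y: "y \<in> V" "lev w \<le> lev y" "(par ^^ (lev y - lev w)) y = w" using assms(3) unfolding beloweq_def by auto
  have "lev y - lev c = Suc (lev y - lev w)" using lw y(2) by simp
  then have "(par ^^ (lev y - lev c)) y = par ((par ^^ (lev y - lev w)) y)" by simp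
  then have e: "(par ^^ (lev y - lev c)) y = c" using y(3) assms(2) by simp
  have l: "lev c < lev y" using lw y(2) by linarith
  show ?thesis unfolding below_def beloweq_def using y(1) e l by simp
qed

definition hits where
  "hits c n \<longleftrightarrow> (\<forall>p. downward_path V root par c p \<longrightarrow> infinite (p ` {Suc 0..} \<inter> X) \<or> n \<le> card (p ` {Suc 0..} \<inter> X))"

lemma hits_mono: "hits c n \<Longrightarrow> m \<le> n \<Longrightarrow> hits c m"
  unfolding hits_def by fastforce

lemma hits_child:
  assumes h: "hits c n" and w: "w \<in> V" "w \<noteq> root" "par w = c"
  shows "hits w (if w \<in> X then n - 1 else n)"
  unfolding hits_def
proof (intro allI impI)
  fix q assume q: "downward_path V root par w q"
  define p where "p k = (case k of 0 \<Rightarrow> c | Suc k \<Rightarrow> q k)" for k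
  have q0: "q 0 = w" using q unfolding downward_path_def by simp
  have qS: "q (Suc k) \<in> V \<and> q (Suc k) \<noteq> root \<and> par (q (Suc k)) = q k" for k
    using q unfolding downward_path_def by blast
  have qall: "q k \<in> V \<and> q k \<noteq> root" for k using q0 w qS by (cases k) auto
  have "downward_path V root par c p" unfolding downward_path_def
  proof (intro conjI allI)
    show "p 0 = c" unfolding p_def by simp
    fix k
    show "p (Suc k) \<in> V" "p (Suc k) \<noteq> root" unfolding p_def using qall by auto
    show "par (p (Suc k)) = p k" unfolding p_def using qS q0 w(3) by (cases k) auto
  qed
  then have hp: "infinite (p ` {Suc 0..} \<inter> X) \<or> n \<le> card (p ` {Suc 0..} \<inter> X)" using h unfolding hits_def by blast
  have "p ` {Suc 0..} = range q"
  proof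
    show "p ` {Suc 0..} \<subseteq> range q" unfolding p_def by (auto split: nat.splits)
    show "range q \<subseteq> p ` {Suc 0..}"
    proof
      fix z assume "z \<in> range q"
      then obtain k where "z = q k" by blast
      then have "z = p (Suc k)" unfolding p_def by simp
      then show "z \<in> p ` {Suc 0..}" by force
    qed
  qed
  moreover have "range q = insert w (q ` {Suc 0..})"
  proof
    show "range q \<subseteq> insert w (q ` {Suc 0..})"
    proof
      fix z assume "z \<in> range q"
      then obtain k where "z = q k" by blast
      then show "z \<in> insert w (q ` {Suc 0..})" using q0 by (cases k) force+
    qed
    show "insert w (q ` {Suc 0..}) \<subseteq> range q" using q0 by auto
  qed
  ultimately have eq: "p ` {Suc 0..} \<inter> X = (if w \<in> X then insert w (q ` {Suc 0..} \<inter> X) else q ` {Suc 0..} \<inter> X)"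
    by auto
  show "infinite (q ` {Suc 0..} \<inter> X) \<or> (if w \<in> X then n - 1 else n) \<le> card (q ` {Suc 0..} \<inter> X)"
  proof (cases "finite (q ` {Suc 0..} \<inter> X)")
    case True
    then have "n \<le> card (p ` {Suc 0..} \<inter> X)" using hp eq by (auto split: if_splits)
    moreover have "card (p ` {Suc 0..} \<inter> X) \<le> (if w \<in> X then card (q ` {Suc 0..} \<inter> X) + 1 else card (q ` {Suc 0..} \<inter> X))"
      using eq True by (simp add: card_insert_le_m1 card_insert_if)
    ultimately show ?thesis by (auto split: if_splits)
  qed simp
qed

lemma hits_nonX:
  assumes "hits c n" "n \<ge> 1" "downward_path V root par c p" "\<forall>k. p (Suc k) \<notin> X"
  shows False
proof -
  have "p ` {Suc 0..} \<inter> X = {}" using assms(4) by (auto dest!: Suc_le_D)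
  then show False using assms(1-3) unfolding hits_def by force
qed

lemma tpres_mono: "tpres f D \<Longrightarrow> D' \<subseteq> D \<Longrightarrow> tpres f D'"
  unfolding tpres_def by blast

lemma clique_mono: "clique D \<Longrightarrow> D' \<subseteq> D \<Longrightarrow> clique D'"
  unfolding clique_def by blast

context
  fixes c K S g
  assumes cf: "cfg c K S g"
begin

lemma cf_props: "c \<in> V" "K \<subseteq> VH" "S \<subseteq> VH" "K \<inter> S = {}" "clique K"
  "\<And>a b. a \<in> S \<Longrightarrow> adj a b \<Longrightarrow> b \<in> K \<union> S" "inj_on g K" "g ` K \<subseteq> X"
  "g ` K \<subseteq> Nup Ls EB ER (lev c) c" "tpres g K"
proof -
  note h = cf[unfolded cfg_def]
  show "c \<in> V" using h by (elim conjE)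
  show "K \<subseteq> VH" using h by (elim conjE)
  show "S \<subseteq> VH" using h by (elim conjE)
  show "K \<inter> S = {}" using h by (elim conjE)
  show "clique K" using h by (elim conjE)
  show "\<And>a b. a \<in> S \<Longrightarrow> adj a b \<Longrightarrow> b \<in> K \<union> S" using h by (elim conjE) blast
  show "inj_on g K" using h by (elim conjE)
  show "g ` K \<subseteq> X" using h by (elim conjE)
  show "g ` K \<subseteq> Nup Ls EB ER (lev c) c" using h by (elim conjE)
  show "tpres g K" using h by (elim conjE)
qed

lemma gK_lev: "a \<in> K \<Longrightarrow> g a \<in> V \<and> lev (g a) \<le> lev c"
  using lev_Nup cf_props(1,9) by blast

lemma hd_props:
  assumes "b \<in> S"
  shows "hdc K S b \<in> cmp S b" "\<And>a. a \<in> K \<Longrightarrow> (\<exists>x\<in>cmp S b. adj x a) \<Longrightarrow> adj (hdc K S b) a"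
proof -
  have "\<exists>v. v \<in> cmp S b \<and> (\<forall>a\<in>K. (\<exists>x\<in>cmp S b. adj x a) \<longrightarrow> adj v a)"
    using complete_vertex[OF cf_props(2,5) _ cf_props(3) assms] cf_props(4) by blast
  then have "hdc K S b \<in> cmp S b \<and> (\<forall>a\<in>K. (\<exists>x\<in>cmp S b. adj x a) \<longrightarrow> adj (hdc K S b) a)"
    unfolding hdc_def by (rule someI_ex)
  then show "hdc K S b \<in> cmp S b" "\<And>a. a \<in> K \<Longrightarrow> (\<exists>x\<in>cmp S b. adj x a) \<Longrightarrow> adj (hdc K S b) a" by blast+
qed

lemma hd_S: "b \<in> S \<Longrightarrow> hdc K S b \<in> S" using hd_props(1) comp_sub by blast

lemma hd_notK: "b \<in> S \<Longrightarrow> hdc K S b \<notin> K" using hd_S cf_props(4) by blast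

lemma cmp_lbl: "b \<in> S \<Longrightarrow> x \<in> cmp S b \<Longrightarrow> lbl K S x = lbl K S b"
  unfolding lbl_def hdc_def using comp_eq by simp

lemma adj_same_lbl: "x \<in> S \<Longrightarrow> y \<in> S \<Longrightarrow> adj x y \<Longrightarrow> lbl K S y = lbl K S x"
  using cmp_lbl[of x y] comp_adj[OF comp_self] by blast

lemma hd_grp: "b \<in> S \<Longrightarrow> hdc K S b \<in> grp K S (lbl K S b)"
  unfolding grp_def using hd_S cmp_lbl hd_props(1) by blast

lemma lbl_union: "b \<in> S \<Longrightarrow> fst (lbl K S b) \<union> snd (lbl K S b) = {a\<in>K. adj (hdc K S b) a}"
  unfolding lbl_def adj_def by auto

lemma lbl_disj: "fst (lbl K S b) \<inter> snd (lbl K S b) = {}"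
  unfolding lbl_def using disjH by auto

lemma lbl_subK: "fst (lbl K S b) \<subseteq> K" "snd (lbl K S b) \<subseteq> K"
  unfolding lbl_def by auto

lemma nbr_in_lbl:
  assumes "b \<in> S" "a \<in> K" "adj b a"
  shows "a \<in> fst (lbl K S b) \<union> snd (lbl K S b)"
proof -
  have "adj (hdc K S b) a" using hd_props(2)[OF assms(1,2)] comp_self assms(3) by blast
  then show ?thesis using lbl_union[OF assms(1)] assms(2) by blast
qed

lemma grp_nbr:
  assumes "x \<in> grp K S l" "a \<in> K" "adj x a"
  shows "a \<in> fst l \<union> snd l"
  using assms nbr_in_lbl unfolding grp_def by blast

lemma black_red:
  assumes "b \<in> S" "a1 \<in> fst (lbl K S b)" "a2 \<in> fst (lbl K S b)" "a1 \<noteq> a2"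
  shows "{a1, a2} \<in> ERH"
proof (rule ccontr)
  assume nr: "{a1, a2} \<notin> ERH"
  define h where "h = hdc K S b"
  have a: "a1 \<in> K" "a2 \<in> K" "{h, a1} \<in> EBH" "{h, a2} \<in> EBH"
    using assms(2,3) unfolding lbl_def h_def by auto
  have "adj a1 a2" using cf_props(5) a(1,2) assms(4) unfolding clique_def by blast
  then have e: "{a1, a2} \<in> EBH" using nr unfolding adj_def by blast
  have hK: "h \<notin> K" using hd_notK assms(1) h_def by simp
  have "h \<in> VH" "a1 \<in> VH" "a2 \<in> VH" using a cf_props(2) hd_S assms(1) cf_props(3) h_def by auto
  moreover have "distinct [h, a1, a2]" using hK a(1,2) assms(4) by auto
  ultimately show False using tf a(3,4) e unfolding triangle_free_def by blast
qed

lemma lbl_card: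
  assumes "b \<in> S"
  shows "card (fst (lbl K S b) \<union> snd (lbl K S b)) \<le> t"
proof -
  define h where "h = hdc K S b"
  define A where "A = fst (lbl K S b) \<union> snd (lbl K S b)"
  have A: "A = {a\<in>K. adj h a}" using lbl_union[OF assms] unfolding A_def h_def by simp
  have hK: "h \<notin> K" using hd_notK assms h_def by simp
  have sub: "insert h A \<subseteq> VH" using A cf_props(2) hd_S[OF assms] cf_props(3) h_def by auto
  have "\<forall>x\<in>insert h A. \<forall>y\<in>insert h A. x \<noteq> y \<longrightarrow> {x, y} \<in> EBH \<union> ERH"
  proof (intro ballI impI)
    fix x y assume xy: "x \<in> insert h A" "y \<in> insert h A" "x \<noteq> y"
    have "adj x y"
    proof (cases "x = h")
      case True then show ?thesis using xy A by auto
    next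
      case False
      show ?thesis
      proof (cases "y = h")
        case True then show ?thesis using xy A False adj_sym by auto
      next
        case False2: False
        then show ?thesis using xy A False cf_props(5) unfolding clique_def by auto
      qed
    qed
    then show "{x, y} \<in> EBH \<union> ERH" unfolding adj_def .
  qed
  moreover have imp: "insert h A \<subseteq> VH \<longrightarrow> (\<forall>x\<in>insert h A. \<forall>y\<in>insert h A. x \<noteq> y \<longrightarrow> {x, y} \<in> EBH \<union> ERH)
     \<longrightarrow> finite (insert h A) \<and> card (insert h A) \<le> t + 1"
    using clq unfolding clique_number_le_def by (rule spec)
  ultimately have "finite (insert h A) \<and> card (insert h A) \<le> t + 1"
    using sub by (meson)
  moreover have "h \<notin> A" using A hK by simp
  ultimately have "card (insert h A) = Suc (card A)" "card (insert h A) \<le> t + 1"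
    using card_insert_disjoint by auto
  then show ?thesis unfolding A_def[symmetric] by simp
qed

lemma lbl_adm:
  assumes "b \<in> S"
  shows "(g ` fst (lbl K S b), g ` snd (lbl K S b)) \<in> admissible t Ls EB ER (lev c) c"
proof -
  define B where "B = fst (lbl K S b)"
  define R where "R = snd (lbl K S b)"
  have BK: "B \<subseteq> K" "R \<subseteq> K" using lbl_subK unfolding B_def R_def by auto
  have "g ` B \<subseteq> Nup Ls EB ER (lev c) c" "g ` R \<subseteq> Nup Ls EB ER (lev c) c"
    using BK cf_props(9) by auto
  moreover have "g ` B \<inter> g ` R = {}"
    using inj_on_image_Int[OF cf_props(7) BK] lbl_disj unfolding B_def R_def by simp
  moreover have "\<forall>x\<in>g ` B. \<forall>y\<in>g ` B. x \<noteq> y \<longrightarrow> {x, y} \<in> ER"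
  proof (intro ballI impI)
    fix x y assume xy: "x \<in> g ` B" "y \<in> g ` B" "x \<noteq> y"
    then obtain a1 a2 where a: "a1 \<in> B" "a2 \<in> B" "x = g a1" "y = g a2" by blast
    then have "a1 \<noteq> a2" using xy by blast
    then have "{a1, a2} \<in> ERH" using black_red[OF assms] a unfolding B_def by blast
    then show "{x, y} \<in> ER" using tpres_sym[OF cf_props(10)] a BK \<open>a1 \<noteq> a2\<close> by blast
  qed
  moreover have "card (g ` B \<union> g ` R) \<le> t"
  proof -
    have "card (g ` B \<union> g ` R) = card (g ` (B \<union> R))" by (simp add: image_Un)
    also have "\<dots> \<le> card (B \<union> R)"
    proof (rule card_image_le)
      show "finite (B \<union> R)" using BK cf_props(2) finH finite_subset by (metis Un_least)
    qed
    also have "\<dots> \<le> t" using lbl_card[OF assms] unfolding B_def R_def .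
    finally show ?thesis .
  qed
  ultimately show ?thesis unfolding admissible_def B_def R_def by blast
qed

lemma chld_props:
  assumes "b \<in> S"
  shows "chld c g (lbl K S b) \<in> set (Ls (Suc (lev c)))" "par (chld c g (lbl K S b)) = c"
    "lab (chld c g (lbl K S b)) = (g ` fst (lbl K S b), g ` snd (lbl K S b), False)"
proof -
  have "c \<in> set (Ls (lev c))" using V_lev cf_props(1) by blast
  then have "\<exists>w. w \<in> set (Ls (Suc (lev c))) \<and> par w = c \<and> lab w = (g ` fst (lbl K S b), g ` snd (lbl K S b), False)"
    using child_exists lbl_adm[OF assms] by blast
  then have "chld c g (lbl K S b) \<in> set (Ls (Suc (lev c))) \<and> par (chld c g (lbl K S b)) = c \<and>
     lab (chld c g (lbl K S b)) = (g ` fst (lbl K S b), g ` snd (lbl K S b), False)"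
    unfolding chld_def by (rule someI_ex)
  then show "chld c g (lbl K S b) \<in> set (Ls (Suc (lev c)))" "par (chld c g (lbl K S b)) = c"
    "lab (chld c g (lbl K S b)) = (g ` fst (lbl K S b), g ` snd (lbl K S b), False)" by blast+
qed

lemma chld_inj:
  assumes "b1 \<in> S" "b2 \<in> S" "chld c g (lbl K S b1) = chld c g (lbl K S b2)"
  shows "lbl K S b1 = lbl K S b2"
proof -
  have "g ` fst (lbl K S b1) = g ` fst (lbl K S b2)" "g ` snd (lbl K S b1) = g ` snd (lbl K S b2)"
    using chld_props(3)[OF assms(1)] chld_props(3)[OF assms(2)] assms(3) by auto
  then have "fst (lbl K S b1) = fst (lbl K S b2)" "snd (lbl K S b1) = snd (lbl K S b2)"
    using inj_on_image_eq_iff[OF cf_props(7)] lbl_subK by metis+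
  then show ?thesis by (simp add: prod_eq_iff)
qed

lemma chld_edge:
  assumes "b \<in> S" "lev z < lev (chld c g (lbl K S b))"
  shows "{chld c g (lbl K S b), z} \<in> EB \<longleftrightarrow> z \<in> g ` fst (lbl K S b)"
    "{chld c g (lbl K S b), z} \<in> ER \<longleftrightarrow> z \<in> g ` snd (lbl K S b)"
proof -
  define w where "w = chld c g (lbl K S b)"
  have w: "w \<in> set (Ls (Suc (lev c)))" "lab w = (g ` fst (lbl K S b), g ` snd (lbl K S b), False)"
    using chld_props[OF assms(1)] unfolding w_def by auto
  show "{chld c g (lbl K S b), z} \<in> EB \<longleftrightarrow> z \<in> g ` fst (lbl K S b)"
  proof
    assume "{chld c g (lbl K S b), z} \<in> EB"
    then have "{z, w} \<in> EB" unfolding w_def by (simp add: insert_commute)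
    then show "z \<in> g ` fst (lbl K S b)" using E1[of z w] assms(2) w(2) unfolding w_def by auto
  next
    assume "z \<in> g ` fst (lbl K S b)"
    then have "{z, w} \<in> EB" using E2[OF w(1)] w(2) by simp
    then show "{chld c g (lbl K S b), z} \<in> EB" unfolding w_def by (simp add: insert_commute)
  qed
  show "{chld c g (lbl K S b), z} \<in> ER \<longleftrightarrow> z \<in> g ` snd (lbl K S b)"
  proof
    assume "{chld c g (lbl K S b), z} \<in> ER"
    then have "{z, w} \<in> ER" unfolding w_def by (simp add: insert_commute)
    then show "z \<in> g ` snd (lbl K S b)" using E1R[of z w] assms(2) w(2) unfolding w_def by auto
  next
    assume "z \<in> g ` snd (lbl K S b)"
    then have "{z, w} \<in> ER" using E2R[OF w(1)] w(2) by simp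
    then show "{chld c g (lbl K S b), z} \<in> ER" unfolding w_def by (simp add: insert_commute)
  qed
qed

lemma chld_lev: "b \<in> S \<Longrightarrow> lev (chld c g (lbl K S b)) = Suc (lev c)"
  using chld_props(1) lev by blast

lemma chld_Nup:
  assumes "b \<in> S"
  shows "insert (chld c g (lbl K S b)) (g ` (fst (lbl K S b) \<union> snd (lbl K S b))) \<subseteq>
     Nup Ls EB ER (lev (chld c g (lbl K S b))) (chld c g (lbl K S b))"
proof -
  define w where "w = chld c g (lbl K S b)"
  have lw: "lev w = Suc (lev c)" using chld_lev[OF assms] w_def by simp
  have "x \<in> Nup Ls EB ER (lev w) w" if x: "x \<in> g ` (fst (lbl K S b) \<union> snd (lbl K S b))" for x
  proof -
    obtain a where a: "a \<in> K" "x = g a" using x lbl_subK by blast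
    have xl: "x \<in> V" "lev x \<le> lev c" using gK_lev a by auto
    then have "x \<in> set (Ls (lev x))" "lev x < lev w" using V_lev lw by auto
    moreover have "{w, x} \<in> EB \<union> ER" using chld_edge[OF assms, of x] x \<open>lev x < lev w\<close> unfolding w_def by auto
    ultimately show ?thesis unfolding Nup_def by blast
  qed
  moreover have "w \<in> Nup Ls EB ER (lev w) w" unfolding Nup_def by simp
  ultimately show ?thesis unfolding w_def by blast
qed


lemma GR_lemma:
  assumes b: "b \<in> S" and l: "l = lbl K S b" and A: "A = fst l \<union> snd l" and w: "w = chld c g l"
    and K1: "A \<subseteq> K'" and K2: "K' - A \<subseteq> {hdc K S b}"
    and KS: "K' \<union> S' = A \<union> grp K S l" and KSd: "K' \<inter> S' = {}"
    and gA: "\<forall>a\<in>A. g' a = g a" and gw: "\<forall>x\<in>K' - A. g' x = w \<and> w \<in> X"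
    and gd: "good w K' S' g'"
  shows "\<exists>f. GR c K S g l f"
proof -
  obtain f where f1: "\<forall>a\<in>K'. f a = g' a" and f2: "inj_on f (K' \<union> S')" and f3: "f ` S' \<subseteq> X"
    and f4: "\<forall>y\<in>S'. below w (f y)" and f5: "tpres f (K' \<union> S')"
    and f6: "\<forall>y\<in>S'. \<forall>z. lev z \<le> lev w \<longrightarrow> z \<notin> g' ` K' \<longrightarrow> {f y, z} \<notin> EB \<union> ER"
    using gd unfolding good_def by blast
  define f' where "f' x = (if x \<in> K then g x else f x)" for x
  have wL: "w \<in> set (Ls (Suc (lev c)))" "par w = c" "lab w = (g ` fst l, g ` snd l, False)"
    using chld_props[OF b] l w by auto
  have lw: "lev w = Suc (lev c)" using chld_lev[OF b] l w by simp
  have wV: "w \<in> V" using wL(1) inV by blast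
  have AK: "A \<subseteq> K" using lbl_subK l A by blast
  have grpS: "grp K S l \<subseteq> S" unfolding grp_def by blast
  have grpK: "x \<in> grp K S l \<Longrightarrow> x \<notin> K" for x using grpS cf_props(4) by blast
  have f'A: "f' x = f x" if "x \<in> A \<union> grp K S l" for x
  proof (cases "x \<in> K")
    case True
    then have "x \<in> A" using that grpK by blast
    then show ?thesis unfolding f'_def using True f1 gA K1 by auto
  next
    case False then show ?thesis unfolding f'_def by simp
  qed
  have fw: "f x = w" if "x \<in> K' - A" for x using that f1 gw by auto
  have inK'S': "x \<in> grp K S l \<Longrightarrow> x \<in> K' \<union> S'" for x using KS by blast
  have grpK': "x \<in> grp K S l \<Longrightarrow> x \<in> K' \<Longrightarrow> x \<in> K' - A" for x using grpK AK by blast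
  have fbel: "beloweq w (f x)" if "x \<in> grp K S l" for x
  proof (cases "x \<in> S'")
    case True then show ?thesis using f4 unfolding below_def by blast
  next
    case False
    then have "x \<in> K' - A" using inK'S' grpK' that by blast
    then show ?thesis using fw beloweq_refl wV by simp
  qed
  have levg: "a \<in> K \<Longrightarrow> lev (g a) \<le> lev c" for a using gK_lev by blast
  have levf: "x \<in> grp K S l \<Longrightarrow> lev c < lev (f x)" for x
    using fbel beloweq_lev[OF _ wV] lw by fastforce
  have wz: "{w, z} \<notin> EB \<union> ER" if "lev z \<le> lev c" "z \<notin> g ` A" for z
  proof
    assume e: "{w, z} \<in> EB \<union> ER"
    have "lev z < lev (chld c g (lbl K S b))" using that(1) lw w l by simp
    then have "z \<in> g ` fst l \<union> g ` snd l" using chld_edge[OF b] e w l by auto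
    then show False using that(2) A by blast
  qed
  have g'K': "g' ` K' \<subseteq> g ` A \<union> {w}" using gA gw K1 by force
  have notg'K': "z \<notin> g' ` K'" if "lev z \<le> lev c" "z \<notin> g ` A" for z
    using g'K' that lw by auto
  have gaA: "g a \<notin> g ` A" if "a \<in> K" "a \<notin> A" for a
    using that AK inj_on_image_mem_iff[OF cf_props(7)] by blast
  have cross: "{f y, g a} \<notin> EB \<union> ER \<and> \<not> adj y a" if a: "a \<in> K" "a \<notin> A" and y: "y \<in> grp K S l" for a y
  proof
    show "\<not> adj y a" using grp_nbr[OF y a(1)] a(2) A by blast
    show "{f y, g a} \<notin> EB \<union> ER"
    proof (cases "y \<in> S'")
      case True
      have "lev (g a) \<le> lev w" using levg[OF a(1)] lw by simp
      then show ?thesis using f6 True notg'K'[OF levg[OF a(1)] gaA[OF a]] by blast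
    next
      case False
      then have "f y = w" using fw inK'S' grpK' y by blast
      then show ?thesis using wz[OF levg[OF a(1)] gaA[OF a]] by simp
    qed
  qed
  have G1: "\<forall>a\<in>K. f' a = g a" unfolding f'_def by simp
  have G2: "inj_on f' (K \<union> grp K S l)"
  proof (rule inj_onI)
    fix x y assume xy: "x \<in> K \<union> grp K S l" "y \<in> K \<union> grp K S l" "f' x = f' y"
    show "x = y"
    proof (cases "x \<in> K")
      case xK: True
      show ?thesis
      proof (cases "y \<in> K")
        case True then show ?thesis using xK xy cf_props(7) unfolding f'_def inj_on_def by auto
      next
        case False
        then have "y \<in> grp K S l" using xy by blast
        then show ?thesis using levf levg xK xy(3) False unfolding f'_def by fastforce
      qed
    next
      case xK: False
      then have xg: "x \<in> grp K S l" using xy by blast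
      show ?thesis
      proof (cases "y \<in> K")
        case True
        then show ?thesis using levf[OF xg] levg[OF True] xK xy(3) unfolding f'_def by fastforce
      next
        case False
        then have yg: "y \<in> grp K S l" using xy by blast
        have "f x = f y" using xy(3) f'A xg yg by simp
        then show ?thesis using f2 inK'S' xg yg unfolding inj_on_def by blast
      qed
    qed
  qed
  have G3: "f' ` grp K S l \<subseteq> X"
  proof
    fix z assume "z \<in> f' ` grp K S l"
    then obtain x where x: "x \<in> grp K S l" "z = f' x" by blast
    then have z: "z = f x" using f'A by simp
    show "z \<in> X"
    proof (cases "x \<in> S'")
      case True then show ?thesis using f3 z by blast
    next
      case False
      then have "x \<in> K' - A" using inK'S' grpK' x(1) by blast
      then show ?thesis using fw gw z by blast
    qed
  qed
  have G4: "\<forall>x\<in>grp K S l. beloweq (chld c g l) (f' x)" using fbel f'A w by simp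
  have G5: "tpres f' (K \<union> grp K S l)" unfolding tpres_def
  proof (intro ballI impI)
    fix x y assume xy: "x \<in> K \<union> grp K S l" "y \<in> K \<union> grp K S l" "x \<noteq> y"
    show "({f' x, f' y} \<in> EB \<longleftrightarrow> {x, y} \<in> EBH) \<and> ({f' x, f' y} \<in> ER \<longleftrightarrow> {x, y} \<in> ERH)"
    proof (cases "x \<in> K \<and> y \<in> K")
      case True
      then show ?thesis using tpres_sym[OF cf_props(10)] xy(3) unfolding f'_def by simp
    next
      case nK: False
      show ?thesis
      proof (cases "x \<in> A \<union> grp K S l \<and> y \<in> A \<union> grp K S l")
        case True
        then have "x \<in> K' \<union> S'" "y \<in> K' \<union> S'" using KS by auto
        then show ?thesis using tpres_sym[OF f5] xy(3) f'A True by simp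
      next
        case False
        show ?thesis
        proof (cases "x \<in> K")
          case True
          then have a: "x \<notin> A" "y \<in> grp K S l" using False nK xy by auto
          have "{f y, g x} \<notin> EB \<union> ER" "\<not> adj y x" using cross[OF True a] by auto
          moreover have "f' x = g x" "f' y = f y" using True f'A a(2) unfolding f'_def by auto
          ultimately show ?thesis unfolding adj_def by (auto simp: insert_commute)
        next
          case xnK: False
          then have xg: "x \<in> grp K S l" using xy by blast
          then have a: "y \<in> K" "y \<notin> A" using False nK xy xnK by auto
          have "{f x, g y} \<notin> EB \<union> ER" "\<not> adj x y" using cross[OF a xg] by auto
          moreover have "f' y = g y" "f' x = f x" using a f'A xg unfolding f'_def by auto
          ultimately show ?thesis unfolding adj_def by auto
        qed
      qed
    qed
  qed
  have G6: "\<forall>y\<in>grp K S l. \<forall>z. lev z \<le> lev c \<longrightarrow> z \<notin> g ` K \<longrightarrow> {f' y, z} \<notin> EB \<union> ER"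
  proof (intro ballI allI impI)
    fix y z assume y: "y \<in> grp K S l" and z: "lev z \<le> lev c" "z \<notin> g ` K"
    have zA: "z \<notin> g ` A" using z(2) AK by blast
    have fy: "f' y = f y" using f'A y by simp
    show "{f' y, z} \<notin> EB \<union> ER"
    proof (cases "y \<in> S'")
      case True
      have "lev z \<le> lev w" using z lw by simp
      then have "{f y, z} \<notin> EB \<union> ER" using f6 True notg'K'[OF z(1) zA] by blast
      then show ?thesis using fy by simp
    next
      case False
      then have "f y = w" using fw inK'S' grpK' y by blast
      then show ?thesis using wz[OF z(1) zA] fy by simp
    qed
  qed
  show ?thesis unfolding GR_def using G1 G2 G3 G4 G5 G6 by blast
qed


lemma sep_lbl:
  assumes "x \<in> S" "y \<in> S" "lbl K S x \<noteq> lbl K S y"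
    "beloweq (chld c g (lbl K S x)) u" "beloweq (chld c g (lbl K S y)) v"
  shows "{u, v} \<notin> EB \<union> ER" "u \<noteq> v"
proof -
  define w1 where "w1 = chld c g (lbl K S x)"
  define w2 where "w2 = chld c g (lbl K S y)"
  have ne: "w1 \<noteq> w2" using chld_inj assms(1-3) unfolding w1_def w2_def by blast
  have lv: "lev w1 = lev w2" "lev w1 \<ge> 1" using chld_lev assms(1,2) unfolding w1_def w2_def by auto
  have np: "\<not> lP w1" "\<not> lP w2" using chld_props(3) assms(1,2) unfolding w1_def w2_def by auto
  have V: "w1 \<in> V" "w2 \<in> V" using chld_props(1) assms(1,2) inV unfolding w1_def w2_def by blast+
  show "{u, v} \<notin> EB \<union> ER" "u \<noteq> v"
    using treesep[OF lv(1) ne _ _ lv(2) np V] assms(4,5) unfolding w1_def w2_def by auto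
qed

lemma combine:
  assumes GRs: "\<forall>b\<in>S. GR c K S g (lbl K S b) (F (lbl K S b))"
  shows "good c K S g"
proof -
  define f where "f x = (if x \<in> K then g x else F (lbl K S x) x)" for x
  have fS: "x \<in> S \<Longrightarrow> f x = F (lbl K S x) x" for x using cf_props(4) unfolding f_def by auto
  have gr: "x \<in> S \<Longrightarrow> x \<in> grp K S (lbl K S x)" for x unfolding grp_def by simp
  have GRx: "x \<in> S \<Longrightarrow> GR c K S g (lbl K S x) (F (lbl K S x))" for x using GRs by blast
  have bel: "x \<in> S \<Longrightarrow> beloweq (chld c g (lbl K S x)) (f x)" for x
    using GRx gr fS unfolding GR_def by metis
  have levf: "x \<in> S \<Longrightarrow> lev c < lev (f x)" for x
  proof -
    assume x: "x \<in> S"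
    have "chld c g (lbl K S x) \<in> V" using chld_props(1)[OF x] inV by blast
    then show ?thesis using beloweq_lev[OF bel[OF x]] chld_lev[OF x] by simp
  qed
  have levg: "a \<in> K \<Longrightarrow> lev (g a) \<le> lev c" for a using gK_lev by blast
  have FK: "x \<in> S \<Longrightarrow> a \<in> K \<Longrightarrow> F (lbl K S x) a = g a" for x a using GRx unfolding GR_def by blast
  have same: "x \<in> S \<Longrightarrow> y \<in> S \<Longrightarrow> lbl K S x = lbl K S y \<Longrightarrow> y \<in> grp K S (lbl K S x)" for x y
    unfolding grp_def by simp
  have G2: "inj_on f (K \<union> S)"
  proof (rule inj_onI)
    fix x y assume xy: "x \<in> K \<union> S" "y \<in> K \<union> S" "f x = f y"
    show "x = y"
    proof (cases "x \<in> K")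
      case xK: True
      show ?thesis
      proof (cases "y \<in> K")
        case True then show ?thesis using xK xy cf_props(7) unfolding f_def inj_on_def by auto
      next
        case False
        then have "y \<in> S" using xy by blast
        then show ?thesis using levf levg[OF xK] xK xy(3) unfolding f_def by fastforce
      qed
    next
      case xK: False
      then have xS: "x \<in> S" using xy by blast
      show ?thesis
      proof (cases "y \<in> K")
        case True
        then show ?thesis using levf[OF xS] levg[OF True] xy(3) unfolding f_def by fastforce
      next
        case False
        then have yS: "y \<in> S" using xy by blast
        show ?thesis
        proof (cases "lbl K S x = lbl K S y")
          case True
          have "inj_on (F (lbl K S x)) (K \<union> grp K S (lbl K S x))" using GRx[OF xS] unfolding GR_def by blast
          moreover have "F (lbl K S x) x = F (lbl K S x) y" using xy(3) fS xS yS True by simp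
          ultimately show ?thesis using gr[OF xS] same[OF xS yS True] unfolding inj_on_def by blast
        next
          case False
          then show ?thesis using sep_lbl(2)[OF xS yS False bel[OF xS] bel[OF yS]] xy(3) by blast
        qed
      qed
    qed
  qed
  have G3: "f ` S \<subseteq> X"
  proof
    fix z assume "z \<in> f ` S"
    then obtain x where x: "x \<in> S" "z = f x" by blast
    then show "z \<in> X" using GRx[OF x(1)] gr[OF x(1)] fS[OF x(1)] unfolding GR_def by blast
  qed
  have G4: "\<forall>x\<in>S. below c (f x)"
    using bel chld_props(1,2) beloweq_child by blast
  have G5: "tpres f (K \<union> S)" unfolding tpres_def
  proof (intro ballI impI)
    fix x y assume xy: "x \<in> K \<union> S" "y \<in> K \<union> S" "x \<noteq> y"
    show "({f x, f y} \<in> EB \<longleftrightarrow> {x, y} \<in> EBH) \<and> ({f x, f y} \<in> ER \<longleftrightarrow> {x, y} \<in> ERH)"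
    proof (cases "x \<in> K")
      case xK: True
      show ?thesis
      proof (cases "y \<in> K")
        case True then show ?thesis using tpres_sym[OF cf_props(10) xK True xy(3)] xK unfolding f_def by simp
      next
        case False
        then have yS: "y \<in> S" using xy by blast
        have tp: "tpres (F (lbl K S y)) (K \<union> grp K S (lbl K S y))" using GRx[OF yS] unfolding GR_def by blast
        have "f x = F (lbl K S y) x" "f y = F (lbl K S y) y" using FK[OF yS xK] fS[OF yS] xK unfolding f_def by auto
        then show ?thesis using tpres_sym[OF tp, of x y] xK gr[OF yS] xy(3) by simp
      qed
    next
      case xK: False
      then have xS: "x \<in> S" using xy by blast
      have tp: "tpres (F (lbl K S x)) (K \<union> grp K S (lbl K S x))" using GRx[OF xS] unfolding GR_def by blast
      show ?thesis
      proof (cases "y \<in> K")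
        case True
        have "f y = F (lbl K S x) y" "f x = F (lbl K S x) x" using FK[OF xS True] fS[OF xS] True unfolding f_def by auto
        then show ?thesis using tpres_sym[OF tp, of x y] True gr[OF xS] xy(3) by simp
      next
        case False
        then have yS: "y \<in> S" using xy by blast
        show ?thesis
        proof (cases "lbl K S x = lbl K S y")
          case True
          have "f x = F (lbl K S x) x" "f y = F (lbl K S x) y" using fS xS yS True by auto
          then show ?thesis using tpres_sym[OF tp, of x y] gr[OF xS] same[OF xS yS True] xy(3) by simp
        next
          case False
          have "{f x, f y} \<notin> EB \<union> ER" using sep_lbl(1)[OF xS yS False bel[OF xS] bel[OF yS]] .
          moreover have "\<not> adj x y" using adj_same_lbl[OF xS yS] False by metis
          ultimately show ?thesis unfolding adj_def by blast
        qed
      qed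
    qed
  qed
  have G6: "\<forall>b\<in>S. \<forall>z. lev z \<le> lev c \<longrightarrow> z \<notin> g ` K \<longrightarrow> {f b, z} \<notin> EB \<union> ER"
  proof (intro ballI allI impI)
    fix b z assume "b \<in> S" "lev z \<le> lev c" "z \<notin> g ` K"
    then show "{f b, z} \<notin> EB \<union> ER" using GRx[OF \<open>b \<in> S\<close>] gr[OF \<open>b \<in> S\<close>] fS[OF \<open>b \<in> S\<close>]
      unfolding GR_def by metis
  qed
  have G1: "\<forall>a\<in>K. f a = g a" unfolding f_def by simp
  show ?thesis unfolding good_def using G1 G2 G3 G4 G5 G6 by blast
qed


lemma hA_clique:
  assumes "b \<in> S"
  shows "clique (insert (hdc K S b) (fst (lbl K S b) \<union> snd (lbl K S b)))"
  unfolding clique_def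
proof (intro ballI impI)
  define h where "h = hdc K S b"
  define A where "A = fst (lbl K S b) \<union> snd (lbl K S b)"
  have A: "A = {a\<in>K. adj h a}" using lbl_union[OF assms] unfolding A_def h_def by simp
  fix x y assume xy: "x \<in> insert (hdc K S b) (fst (lbl K S b) \<union> snd (lbl K S b))"
     "y \<in> insert (hdc K S b) (fst (lbl K S b) \<union> snd (lbl K S b))" "x \<noteq> y"
  then have xy': "x \<in> insert h A" "y \<in> insert h A" unfolding h_def A_def by auto
  show "adj x y"
  proof (cases "x = h")
    case True then show ?thesis using xy' xy(3) A by auto
  next
    case False
    show ?thesis
    proof (cases "y = h")
      case True then show ?thesis using xy' A False adj_sym by auto
    next
      case False2: False
      then show ?thesis using xy' xy(3) A False cf_props(5) unfolding clique_def by auto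
    qed
  qed
qed

lemma cfg_nX:
  assumes b: "b \<in> S"
  shows "cfg (chld c g (lbl K S b)) (fst (lbl K S b) \<union> snd (lbl K S b)) (grp K S (lbl K S b)) g"
proof -
  define l where "l = lbl K S b"
  define A where "A = fst l \<union> snd l"
  define w where "w = chld c g l"
  have AK: "A \<subseteq> K" using lbl_subK unfolding A_def l_def by blast
  have grpS: "grp K S l \<subseteq> S" unfolding grp_def by blast
  have "w \<in> V" using chld_props(1)[OF b] inV unfolding w_def l_def by blast
  moreover have "A \<subseteq> VH" "grp K S l \<subseteq> VH" "A \<inter> grp K S l = {}" using AK grpS cf_props(2,3,4) by auto
  moreover have "clique A" using clique_mono[OF cf_props(5) AK] .
  moreover have "\<forall>a\<in>grp K S l. \<forall>x. adj a x \<longrightarrow> x \<in> A \<union> grp K S l"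
  proof (intro ballI allI impI)
    fix a x assume a: "a \<in> grp K S l" "adj a x"
    then have aS: "a \<in> S" using grpS by blast
    then have "x \<in> K \<union> S" using cf_props(6) a(2) by blast
    then show "x \<in> A \<union> grp K S l"
    proof
      assume "x \<in> K" then show ?thesis using grp_nbr[OF a(1) _ a(2)] A_def by blast
    next
      assume xS: "x \<in> S"
      have "lbl K S x = lbl K S a" using adj_same_lbl[OF aS xS a(2)] .
      then show ?thesis using a(1) xS unfolding grp_def by simp
    qed
  qed
  moreover have "inj_on g A" using inj_on_subset[OF cf_props(7) AK] .
  moreover have "g ` A \<subseteq> X" using AK cf_props(8) by blast
  moreover have "g ` A \<subseteq> Nup Ls EB ER (lev w) w" using chld_Nup[OF b] unfolding w_def A_def l_def by blast
  moreover have "tpres g A" using tpres_mono[OF cf_props(10) AK] .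
  ultimately show ?thesis unfolding cfg_def w_def A_def l_def by blast
qed

lemma cfg_X:
  assumes b: "b \<in> S" and wX: "chld c g (lbl K S b) \<in> X"
  shows "cfg (chld c g (lbl K S b)) (insert (hdc K S b) (fst (lbl K S b) \<union> snd (lbl K S b)))
     (grp K S (lbl K S b) - {hdc K S b}) (g(hdc K S b := chld c g (lbl K S b)))"
proof -
  define l where "l = lbl K S b"
  define A where "A = fst l \<union> snd l"
  define w where "w = chld c g l"
  define h where "h = hdc K S b"
  define g' where "g' = g(h := w)"
  have AK: "A \<subseteq> K" using lbl_subK unfolding A_def l_def by blast
  have grpS: "grp K S l \<subseteq> S" unfolding grp_def by blast
  have hS: "h \<in> S" "h \<notin> K" using hd_S[OF b] hd_notK[OF b] unfolding h_def by auto
  have hA: "h \<notin> A" using hS AK by blast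
  have hg: "h \<in> grp K S l" using hd_grp[OF b] unfolding h_def l_def .
  have lw: "lev w = Suc (lev c)" using chld_lev[OF b] unfolding w_def l_def .
  have g'A: "\<forall>a\<in>A. g' a = g a" using hA unfolding g'_def by auto
  have "w \<in> V" using chld_props(1)[OF b] inV unfolding w_def l_def by blast
  moreover have "insert h A \<subseteq> VH" "grp K S l - {h} \<subseteq> VH" "insert h A \<inter> (grp K S l - {h}) = {}"
    using AK grpS cf_props(2,3,4) hS by auto
  moreover have "clique (insert h A)" using hA_clique[OF b] unfolding h_def A_def l_def .
  moreover have "\<forall>a\<in>grp K S l - {h}. \<forall>x. adj a x \<longrightarrow> x \<in> insert h A \<union> (grp K S l - {h})"
  proof (intro ballI allI impI)
    fix a x assume a: "a \<in> grp K S l - {h}" "adj a x"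
    then have aS: "a \<in> S" using grpS by blast
    then have "x \<in> K \<union> S" using cf_props(6) a(2) by blast
    then show "x \<in> insert h A \<union> (grp K S l - {h})"
    proof
      assume "x \<in> K" then show ?thesis using grp_nbr[of a l x] a A_def by blast
    next
      assume xS: "x \<in> S"
      have "lbl K S x = lbl K S a" using adj_same_lbl[OF aS xS a(2)] .
      then show ?thesis using a(1) xS unfolding grp_def by auto
    qed
  qed
  moreover have "inj_on g' (insert h A)"
  proof -
    have "inj_on g' A" using inj_on_subset[OF cf_props(7) AK] g'A inj_on_cong by metis
    moreover have "g' h \<notin> g' ` (A - {h})"
    proof
      assume "g' h \<in> g' ` (A - {h})"
      then obtain a where a: "a \<in> A" "w = g a" using g'A unfolding g'_def by auto
      then show False using gK_lev[of a] AK lw by auto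
    qed
    ultimately show ?thesis by simp
  qed
  moreover have "g' ` insert h A \<subseteq> X" using AK cf_props(8) g'A wX unfolding g'_def w_def l_def by auto
  moreover have "g' ` insert h A \<subseteq> Nup Ls EB ER (lev w) w"
    using chld_Nup[OF b] g'A unfolding w_def A_def l_def g'_def by auto
  moreover have "tpres g' (insert h A)" unfolding tpres_def
  proof (intro ballI impI)
    fix x y assume xy: "x \<in> insert h A" "y \<in> insert h A" "x \<noteq> y"
    have key: "({w, g a} \<in> EB \<longleftrightarrow> {h, a} \<in> EBH) \<and> ({w, g a} \<in> ER \<longleftrightarrow> {h, a} \<in> ERH)" if a: "a \<in> A" for a
    proof -
      have aK: "a \<in> K" using a AK by blast
      have ll: "lev (g a) < lev (chld c g (lbl K S b))" using gK_lev[OF aK] lw unfolding w_def l_def by simp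
      have i1: "g a \<in> g ` fst l \<longleftrightarrow> a \<in> fst l" using inj_on_image_mem_iff[OF cf_props(7) aK lbl_subK(1)] unfolding l_def .
      have i2: "g a \<in> g ` snd l \<longleftrightarrow> a \<in> snd l" using inj_on_image_mem_iff[OF cf_props(7) aK lbl_subK(2)] unfolding l_def .
      have "a \<in> fst l \<longleftrightarrow> {h, a} \<in> EBH" "a \<in> snd l \<longleftrightarrow> {h, a} \<in> ERH"
        using aK unfolding l_def lbl_def h_def by auto
      then show ?thesis using chld_edge[OF b ll] i1 i2 unfolding w_def l_def by simp
    qed
    show "({g' x, g' y} \<in> EB \<longleftrightarrow> {x, y} \<in> EBH) \<and> ({g' x, g' y} \<in> ER \<longleftrightarrow> {x, y} \<in> ERH)"
    proof (cases "x = h")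
      case True
      then have "y \<in> A" using xy by auto
      then show ?thesis using key True g'A unfolding g'_def by simp
    next
      case False
      then have xA: "x \<in> A" using xy by auto
      show ?thesis
      proof (cases "y = h")
        case True
        have "g' x = g x" "g' y = w" using xA g'A True unfolding g'_def by auto
        then show ?thesis using key[OF xA] True by (simp add: insert_commute)
      next
        case False2: False
        then have yA: "y \<in> A" using xy by auto
        then show ?thesis using tpres_sym[OF cf_props(10), of x y] xA AK xy(3) g'A by auto
      qed
    qed
  qed
  ultimately show ?thesis unfolding cfg_def w_def A_def l_def h_def g'_def by blast
qed


lemma good_empty: "good c K {} g"
  unfolding good_def using cf_props(7,10) by (intro exI[of _ g]) auto

lemma step:
  assumes IH: "\<forall>c' K' S' g'. card S' < card S \<longrightarrow> cfg c' K' S' g' \<longrightarrow> hits c' (card S') \<longrightarrow> good c' K' S' g'"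
    and hc: "hits c (card S)" and ng: "\<not> good c K S g"
  shows "\<exists>w K'. w \<in> V \<and> w \<noteq> root \<and> par w = c \<and> w \<notin> X \<and> cfg w K' S g \<and> hits w (card S) \<and> \<not> good w K' S g"
proof (rule ccontr)
  assume H: "\<not> (\<exists>w K'. w \<in> V \<and> w \<noteq> root \<and> par w = c \<and> w \<notin> X \<and> cfg w K' S g \<and> hits w (card S) \<and> \<not> good w K' S g)"
  have finS: "finite S" using cf_props(3) finH finite_subset by blast
  have "\<forall>b\<in>S. \<exists>f. GR c K S g (lbl K S b) f"
  proof
    fix b assume b: "b \<in> S"
    define l where "l = lbl K S b"
    define A where "A = fst l \<union> snd l"
    define w where "w = chld c g l"
    define h where "h = hdc K S b"
    have AK: "A \<subseteq> K" using lbl_subK unfolding A_def l_def by blast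
    have grpS: "grp K S l \<subseteq> S" unfolding grp_def by blast
    have hS: "h \<in> S" "h \<notin> K" using hd_S[OF b] hd_notK[OF b] unfolding h_def by auto
    have hA: "h \<notin> A" using hS AK by blast
    have hg: "h \<in> grp K S l" using hd_grp[OF b] unfolding h_def l_def .
    have wL: "w \<in> set (Ls (Suc (lev c)))" "par w = c" using chld_props[OF b] unfolding w_def l_def by auto
    have wV: "w \<in> V" using wL inV by blast
    have wr: "w \<noteq> root"
    proof
      assume "w = root"
      then have "w \<in> set (Ls 0)" using L0 by simp
      then show False using wL(1) Ldisj[of 0 "Suc (lev c)"] by blast
    qed
    have hw: "hits w (if w \<in> X then card S - 1 else card S)" using hits_child[OF hc wV wr wL(2)] .
    have cg: "card (grp K S l) \<le> card S" using card_mono[OF finS grpS] .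
    show "\<exists>f. GR c K S g (lbl K S b) f"
    proof (cases "w \<in> X")
      case True
      define K' where "K' = insert h A"
      define S' where "S' = grp K S l - {h}"
      define g' where "g' = g(h := w)"
      have "S' \<subset> S" using grpS hS unfolding S'_def by blast
      then have cS': "card S' < card S" using finS psubset_card_mono by blast
      have "card S' \<le> card S - 1" using cS' by simp
      then have hw': "hits w (card S')" using hits_mono hw True by simp
      have cw: "cfg w K' S' g'" using cfg_X[OF b] True unfolding K'_def S'_def g'_def w_def h_def A_def l_def by simp
      have gd: "good w K' S' g'" using IH cS' cw hw' by blast
      show ?thesis
      proof (rule GR_lemma[OF b refl refl refl])
        show "fst (lbl K S b) \<union> snd (lbl K S b) \<subseteq> K'" unfolding K'_def A_def l_def by blast
        show "K' - (fst (lbl K S b) \<union> snd (lbl K S b)) \<subseteq> {hdc K S b}" unfolding K'_def A_def l_def h_def by blast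
        show "K' \<union> S' = fst (lbl K S b) \<union> snd (lbl K S b) \<union> grp K S (lbl K S b)"
          using hg unfolding K'_def S'_def A_def l_def by blast
        show "K' \<inter> S' = {}" using AK grpS cf_props(4) unfolding K'_def S'_def by blast
        show "\<forall>a\<in>fst (lbl K S b) \<union> snd (lbl K S b). g' a = g a" using hA unfolding g'_def A_def l_def by auto
        show "\<forall>x\<in>K' - (fst (lbl K S b) \<union> snd (lbl K S b)). g' x = chld c g (lbl K S b) \<and> chld c g (lbl K S b) \<in> X"
          using True unfolding K'_def g'_def A_def l_def w_def h_def by auto
        show "good (chld c g (lbl K S b)) K' S' g'" using gd unfolding w_def l_def .
      qed
    next
      case False
      have cw: "cfg w A (grp K S l) g" using cfg_nX[OF b] unfolding w_def A_def l_def .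
      have hw': "hits w (card (grp K S l))" using hits_mono hw False cg by simp
      have gd: "good w A (grp K S l) g"
      proof (cases "card (grp K S l) < card S")
        case True then show ?thesis using IH cw hw' by blast
      next
        case False2: False
        then have "grp K S l = S" using card_subset_eq[OF finS grpS] cg by simp
        then show ?thesis using H wV wr wL(2) False cw hw by auto
      qed
      show ?thesis
      proof (rule GR_lemma[OF b refl refl refl])
        show "fst (lbl K S b) \<union> snd (lbl K S b) \<subseteq> A" unfolding A_def l_def by blast
        show "A - (fst (lbl K S b) \<union> snd (lbl K S b)) \<subseteq> {hdc K S b}" unfolding A_def l_def by blast
        show "A \<union> grp K S l = fst (lbl K S b) \<union> snd (lbl K S b) \<union> grp K S (lbl K S b)"
          unfolding A_def l_def by blast
        show "A \<inter> grp K S l = {}" using AK grpS cf_props(4) by blast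
        show "\<forall>a\<in>fst (lbl K S b) \<union> snd (lbl K S b). g a = g a" by simp
        show "\<forall>x\<in>A - (fst (lbl K S b) \<union> snd (lbl K S b)). g x = chld c g (lbl K S b) \<and> chld c g (lbl K S b) \<in> X"
          unfolding A_def l_def by blast
        show "good (chld c g (lbl K S b)) A (grp K S l) g" using gd unfolding w_def l_def .
      qed
    qed
  qed
  then have "\<forall>b\<in>S. GR c K S g (lbl K S b) ((\<lambda>l. SOME f. GR c K S g l f) (lbl K S b))"
    by (metis someI_ex)
  then have "good c K S g" by (rule combine)
  with ng show False by blast
qed

end

end

context mn begin

lemma claim_n: "\<forall>c K S g. card S = n \<longrightarrow> cfg c K S g \<longrightarrow> hits c n \<longrightarrow> good c K S g"
proof (induction n rule: less_induct)
  case (less n)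
  show ?case
  proof (intro allI impI)
    fix c K S g assume cS: "card S = n" and cf: "cfg c K S g" and hc: "hits c n"
    show "good c K S g"
    proof (rule ccontr)
      assume ng: "\<not> good c K S g"
      have "S \<subseteq> VH" using cf unfolding cfg_def by (elim conjE)
      then have finS: "finite S" using finH finite_subset by blast
      have Sne: "S \<noteq> {}" using ng good_empty[OF cf] by blast
      then have "card S > 0" using finS card_gt_0_iff by blast
      then have n1: "n \<ge> 1" using cS by simp
      have IH: "\<forall>c' K' S' g'. card S' < card S \<longrightarrow> cfg c' K' S' g' \<longrightarrow> hits c' (card S') \<longrightarrow> good c' K' S' g'"
        using less.IH cS by blast
      define P where "P y \<longleftrightarrow> cfg (fst y) (snd y) S g \<and> hits (fst y) (card S) \<and> \<not> good (fst y) (snd y) S g" for y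
      have stepP: "\<exists>y. fst y \<in> V \<and> fst y \<noteq> root \<and> par (fst y) = fst x \<and> fst y \<notin> X \<and> P y" if "P x" for x
      proof -
        have "\<exists>w K'. w \<in> V \<and> w \<noteq> root \<and> par w = fst x \<and> w \<notin> X \<and> cfg w K' S g \<and> hits w (card S) \<and> \<not> good w K' S g"
          using step[of "fst x" "snd x" S g] that IH unfolding P_def by blast
        then show ?thesis unfolding P_def by force
      qed
      define nxt where "nxt x = (SOME y. fst y \<in> V \<and> fst y \<noteq> root \<and> par (fst y) = fst x \<and> fst y \<notin> X \<and> P y)" for x :: "'v \<times> 'h set"
      have nxt: "fst (nxt x) \<in> V \<and> fst (nxt x) \<noteq> root \<and> par (fst (nxt x)) = fst x \<and> fst (nxt x) \<notin> X \<and> P (nxt x)"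
        if "P x" for x
        unfolding nxt_def by (rule someI_ex[OF stepP[OF that]])
      define sq where "sq k = (nxt ^^ k) (c, K)" for k
      have Pall: "P (sq k)" for k
      proof (induction k)
        case 0 then show ?case unfolding sq_def P_def using cf hc cS ng by simp
      next
        case (Suc k)
        have "sq (Suc k) = nxt (sq k)" unfolding sq_def by simp
        then show ?case using nxt[OF Suc] by simp
      qed
      have sqS: "sq (Suc k) = nxt (sq k)" for k unfolding sq_def by simp
      define p where "p k = fst (sq k)" for k
      have "downward_path V root par c p" unfolding downward_path_def
      proof (intro conjI allI)
        show "p 0 = c" unfolding p_def sq_def by simp
        fix k
        show "p (Suc k) \<in> V" "p (Suc k) \<noteq> root" "par (p (Suc k)) = p k"
          unfolding p_def sqS using nxt[OF Pall[of k]] by auto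
      qed
      moreover have "\<forall>k. p (Suc k) \<notin> X" unfolding p_def sqS using nxt Pall by blast
      ultimately show False using hits_nonX[OF hc n1] by blast
    qed
  qed
qed

lemma claim: "cfg c K S g \<Longrightarrow> hits c (card S) \<Longrightarrow> good c K S g"
  using claim_n by blast

end


context mn begin

lemma top_hits:
  assumes u: "u \<in> V"
    and np: "\<forall>p. downward_path V root par u p \<longrightarrow> \<not> (finite (range p \<inter> X) \<and> card (range p \<inter> X) \<le> m)"
  shows "hits u (if u \<in> X then m else Suc m)"
  unfolding hits_def
proof (intro allI impI)
  fix p assume p: "downward_path V root par u p"
  have p0: "p 0 = u" using p unfolding downward_path_def by simp
  have r: "range p = insert u (p ` {Suc 0..})"
  proof
    show "range p \<subseteq> insert u (p ` {Suc 0..})"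
    proof
      fix z assume "z \<in> range p"
      then obtain k where "z = p k" by blast
      then show "z \<in> insert u (p ` {Suc 0..})" using p0 by (cases k) force+
    qed
    show "insert u (p ` {Suc 0..}) \<subseteq> range p" using p0 by auto
  qed
  have np': "\<not> (finite (range p \<inter> X) \<and> card (range p \<inter> X) \<le> m)" using np p by blast
  show "infinite (p ` {Suc 0..} \<inter> X) \<or> (if u \<in> X then m else Suc m) \<le> card (p ` {Suc 0..} \<inter> X)"
  proof (cases "finite (p ` {Suc 0..} \<inter> X)")
    case True
    have eq: "range p \<inter> X = (if u \<in> X then insert u (p ` {Suc 0..} \<inter> X) else p ` {Suc 0..} \<inter> X)"
      using r by auto
    then have fin: "finite (range p \<inter> X)" using True by simp
    then have gt: "m < card (range p \<inter> X)" using np' by simp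
    have "card (range p \<inter> X) \<le> (if u \<in> X then Suc (card (p ` {Suc 0..} \<inter> X)) else card (p ` {Suc 0..} \<inter> X))"
      using eq True by (simp add: card_insert_if)
    then show ?thesis using gt by (auto split: if_splits)
  qed simp
qed

lemma good_contains:
  assumes "cfg c K S g" "good c K S g" "K \<union> S = VH"
  shows "contains_induced VH EBH ERH X EB ER"
proof -
  obtain f where f: "\<forall>a\<in>K. f a = g a" "inj_on f (K \<union> S)" "f ` S \<subseteq> X" "tpres f (K \<union> S)"
    using assms(2) unfolding good_def by blast
  have "g ` K \<subseteq> X" using assms(1) unfolding cfg_def by (elim conjE)
  then have "f ` K \<subseteq> X" using f(1) by auto
  then have "f ` VH \<subseteq> X" using f(3) assms(3) by blast
  moreover have "inj_on f VH" using f(2) assms(3) by simp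
  moreover have "tpres f VH" using f(4) assms(3) by simp
  ultimately show ?thesis unfolding contains_induced_def tpres_def by blast
qed

lemma main_mn:
  assumes u: "u \<in> V" and hf: "H_free_on VH EBH ERH X EB ER"
  shows "\<exists>p. downward_path V root par u p \<and> finite (range p \<inter> X) \<and> card (range p \<inter> X) \<le> card VH - 1"
proof (rule ccontr)
  assume neg: "\<not> (\<exists>p. downward_path V root par u p \<and> finite (range p \<inter> X) \<and> card (range p \<inter> X) \<le> card VH - 1)"
  then have np: "\<forall>p. downward_path V root par u p \<longrightarrow> \<not> (finite (range p \<inter> X) \<and> card (range p \<inter> X) \<le> card VH - 1)"
    by blast
  have VHne: "VH \<noteq> {}"
  proof
    assume "VH = {}"
    then have "contains_induced VH EBH ERH X EB ER" unfolding contains_induced_def by simp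
    then show False using hf unfolding H_free_on_def by blast
  qed
  then obtain v0 where v0: "v0 \<in> VH" by blast
  have c1: "card VH \<ge> 1" using VHne finH by (simp add: Suc_le_eq card_gt_0_iff)
  have hu: "hits u (if u \<in> X then card VH - 1 else Suc (card VH - 1))" using top_hits[OF u np] .
  have uN: "u \<in> Nup Ls EB ER (lev u) u" unfolding Nup_def by simp
  show False
  proof (cases "u \<in> X")
    case True
    define g where "g = (\<lambda>_::'h. u)"
    have cS: "card (VH - {v0}) = card VH - 1" using v0 finH by simp
    have cf: "cfg u {v0} (VH - {v0}) g"
      unfolding cfg_def
    proof (intro conjI)
      show "\<forall>a\<in>VH - {v0}. \<forall>b. adj a b \<longrightarrow> b \<in> {v0} \<union> (VH - {v0})" using adj_props by blast
      show "g ` {v0} \<subseteq> X" "g ` {v0} \<subseteq> Nup Ls EB ER (lev u) u" using True uN unfolding g_def by auto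
      show "tpres g {v0}" unfolding tpres_def by simp
      show "clique {v0}" unfolding clique_def by simp
    qed (use u v0 in auto)
    have "hits u (card (VH - {v0}))" using hu True cS by simp
    then have "good u {v0} (VH - {v0}) g" using claim cf by blast
    then have "contains_induced VH EBH ERH X EB ER" using good_contains[OF cf] v0 by blast
    then show False using hf unfolding H_free_on_def by blast
  next
    case False
    define g where "g = (\<lambda>_::'h. u)"
    have cf: "cfg u {} VH g"
      unfolding cfg_def
    proof (intro conjI)
      show "\<forall>a\<in>VH. \<forall>b. adj a b \<longrightarrow> b \<in> {} \<union> VH" using adj_props by blast
      show "tpres g {}" unfolding tpres_def by simp
      show "clique {}" unfolding clique_def by simp
    qed (use u in auto)
    have "hits u (card VH)" using hu False c1 by simp
    then have "good u {} VH g" using claim cf by blast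
    then have "contains_induced VH EBH ERH X EB ER" using good_contains[OF cf] by blast
    then show False using hf unfolding H_free_on_def by blast
  qed
qed

end

theorem lemma4p11:
  fixes t :: nat
    and V :: "'v set" and root :: 'v and Ls :: "nat \<Rightarrow> 'v list" and par :: "'v \<Rightarrow> 'v"
    and lab :: "'v \<Rightarrow> 'v set \<times> 'v set \<times> bool" and EB ER :: "'v set set"
    and VH :: "'h set" and EBH ERH :: "'h set set"
    and X :: "'v set" and u :: 'v
  assumes "t \<ge> 1"
    and "Gt_construction t V root Ls par lab EB ER"
    and "trigraph VH EBH ERH" and "finite VH"
    and "chordal_trigraph VH EBH ERH"
    and "clique_number_le VH (EBH \<union> ERH) (t + 1)"
    and "triangle_free VH EBH"
    and "X \<subseteq> V"
    and "H_free_on VH EBH ERH X EB ER"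
    and "u \<in> V"
  shows "\<exists>p. downward_path V root par u p \<and>
             finite (range p \<inter> X) \<and> card (range p \<inter> X) \<le> card VH - 1"
proof -
  interpret M: mn t V root Ls par lab EB ER VH EBH ERH X
    unfolding mn_def gtc_def hg_def mn_axioms_def using assms by blast
  show ?thesis using M.main_mn assms(9,10) by blast
qed


end
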